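(* Let $K$ be a field, $R=\bigoplus_{m\ge0}R_m$ an $\mathbb N$-graded $K$-algebra, and let $A=\sigma(R)\langle x_1,x_2\rangle$ be a connected graded skew PBW extension of $R$. Then $A$ is a connected graded double Ore extension of $R$ (with generating variables $x_1,x_2$).
   Context: All algebras are over a field $K$; a graded algebra $B=\bigoplus_{p\ge0}B_p$ is connected if $B_0=K$. Skew PBW extension: a ring $A$ is a skew PBW extension of $R$ in $x_1,\dots,x_n$, written $A=\sigma(R)\langle x_1,\dots,x_n\rangle$, if (i) $R\subseteq A$; (ii) $A$ is a free left $R$-module with basis the standard monomials $x^\alpha=x_1^{\alpha_1}\cdots x_n^{\alpha_n}$, $\alpha\in\mathbb N^n$; (iii) for each $i$ and $r\in R\setminus\{0\}$ there is $c_{i,r}\in R\setminus\{0\}$ with $x_ir-c_{i,r}x_i\in R$; (iv) for all $i,j$ there is $c_{i,j}\in R\setminus\{0\}$ with $x_jx_i-c_{i,j}x_ix_j\in R+Rx_1+\cdots+Rx_n$. Then for each $i$ there are an injective ring endomorphism $\sigma_i$ of $R$ and a $\sigma_i$-derivation $\delta_i$ with $x_ir=\sigma_i(r)x_i+\delta_i(r)$. $A$ is bijective if every $\sigma_i$ is bijective and every $c_{i,j}$ ($i<j$) is invertible. A graded skew PBW extension is a bijective skew PBW extension of an $\mathbb N$-graded algebra $R$ such that each $\sigma_i$ is a graded homomorphism, each $\delta_i$ satisfies $\delta_i(R_m)\subseteq R_{m+1}$, and $x_jx_i-c_{i,j}x_ix_j\in R_2+R_1x_1+\cdots+R_1x_n$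 with $c_{i,j}\in R_0$; it is graded by $A_p=\mathrm{span}_K\{r_tx^\alpha: t+|\alpha|=p,\ r_t\in R_t\}$. Double Ore extensions: a $K$-algebra $B\supseteq R$ is a right double Ore extension of $R$ if (1) $B$ is generated by $R$ and $x_1,x_2$; (2) $x_2x_1=p_{12}x_1x_2+p_{11}x_1^2+\tau_1x_1+\tau_2x_2+\tau_0$ with $p_{12},p_{11}\in K$, $\tau_i\in R$; (3) $B$ is a free left $R$-module with basis $\{x_1^ax_2^b\}_{a,b\ge0}$; (4) $x_1R+x_2R\subseteq Rx_1+Rx_2+R$. It is a left double Ore extension if (1) holds, $x_1x_2=p'_{12}x_2x_1+p'_{11}x_1^2+x_1\tau'_1+x_2\tau'_2+\tau'_0$ with $p'_{12},p'_{11}\in K$, $\tau'_i\in R$, $B$ is a free right $R$-module with basis $\{x_1^ax_2^b\}$, and $x_1R+x_2R\subseteq Rx_1+Rx_2+R$. It is a double Ore extension if it is both a left and a right double Ore extension with the same generators $x_1,x_2$. It is graded if all its relations are homogeneous with $\deg x_1=\deg x_2=1$ (with $R$ graded). *)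

theory Defs
  imports "HOL-Algebra.Algebra"
begin

text \<open>All objects live inside one ambient ring A (HOL-Algebra record).
  K is a central subfield of A (so A is a K-algebra), R is a subring of A containing K.\<close>

definition K_algebra_setup :: "'a ring \<Rightarrow> 'a set \<Rightarrow> 'a set \<Rightarrow> bool" where
  "K_algebra_setup A K R \<longleftrightarrow> ring A \<and> subfield K A \<and> subring R A \<and> K \<subseteq> R \<and>
     (\<forall>k\<in>K. \<forall>a\<in>carrier A. k \<otimes>\<^bsub>A\<^esub> a = a \<otimes>\<^bsub>A\<^esub> k)"

definition graded_alg :: "'a ring \<Rightarrow> 'a set \<Rightarrow> 'a set \<Rightarrow> (nat \<Rightarrow> 'a set) \<Rightarrow> bool" where
  "graded_alg A K R Rg \<longleftrightarrow>
     (\<forall>m. Rg m \<subseteq> R \<and> \<zero>\<^bsub>A\<^esub> \<in> Rg m \<and>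
          (\<forall>a\<in>Rg m. \<forall>b\<in>Rg m. a \<oplus>\<^bsub>A\<^esub> b \<in> Rg m) \<and>
          (\<forall>k\<in>K. \<forall>a\<in>Rg m. k \<otimes>\<^bsub>A\<^esub> a \<in> Rg m)) \<and>
     (\<forall>m n. \<forall>a\<in>Rg m. \<forall>b\<in>Rg n. a \<otimes>\<^bsub>A\<^esub> b \<in> Rg (m + n)) \<and>
     \<one>\<^bsub>A\<^esub> \<in> Rg 0 \<and>
     (\<forall>r\<in>R. \<exists>N f. (\<forall>m. f m \<in> Rg m) \<and> r = finsum A f {..<N}) \<and>
     (\<forall>N f. (\<forall>m. f m \<in> Rg m) \<and> finsum A f {..<N} = \<zero>\<^bsub>A\<^esub> \<longrightarrow> (\<forall>m<N. f m = \<zero>\<^bsub>A\<^esub>))"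

definition mon :: "'a ring \<Rightarrow> 'a \<Rightarrow> 'a \<Rightarrow> nat \<times> nat \<Rightarrow> 'a" where
  "mon A x1 x2 p = (x1 [^]\<^bsub>A\<^esub> fst p) \<otimes>\<^bsub>A\<^esub> (x2 [^]\<^bsub>A\<^esub> snd p)"

definition left_free_basis :: "'a ring \<Rightarrow> 'a set \<Rightarrow> (nat \<times> nat \<Rightarrow> 'a) \<Rightarrow> bool" where
  "left_free_basis A R B \<longleftrightarrow>
     (\<forall>a\<in>carrier A. \<exists>N c. (\<forall>p. c p \<in> R) \<and>
         a = finsum A (\<lambda>p. c p \<otimes>\<^bsub>A\<^esub> B p) ({..<N} \<times> {..<N})) \<and>
     (\<forall>N c. (\<forall>p. c p \<in> R) \<and> finsum A (\<lambda>p. c p \<otimes>\<^bsub>A\<^esub> B p) ({..<N} \<times> {..<N}) = \<zero>\<^bsub>A\<^esub>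
         \<longrightarrow> (\<forall>p\<in>{..<N} \<times> {..<N}. c p = \<zero>\<^bsub>A\<^esub>))"

definition right_free_basis :: "'a ring \<Rightarrow> 'a set \<Rightarrow> (nat \<times> nat \<Rightarrow> 'a) \<Rightarrow> bool" where
  "right_free_basis A R B \<longleftrightarrow>
     (\<forall>a\<in>carrier A. \<exists>N c. (\<forall>p. c p \<in> R) \<and>
         a = finsum A (\<lambda>p. B p \<otimes>\<^bsub>A\<^esub> c p) ({..<N} \<times> {..<N})) \<and>
     (\<forall>N c. (\<forall>p. c p \<in> R) \<and> finsum A (\<lambda>p. B p \<otimes>\<^bsub>A\<^esub> c p) ({..<N} \<times> {..<N}) = \<zero>\<^bsub>A\<^esub>
         \<longrightarrow> (\<forall>p\<in>{..<N} \<times> {..<N}. c p = \<zero>\<^bsub>A\<^esub>))"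

definition lcomb :: "'a ring \<Rightarrow> 'a set \<Rightarrow> 'a set \<Rightarrow> 'a set \<Rightarrow> 'a \<Rightarrow> 'a \<Rightarrow> 'a set" where
  "lcomb A S0 S1 S2 x1 x2 =
     {r0 \<oplus>\<^bsub>A\<^esub> (r1 \<otimes>\<^bsub>A\<^esub> x1) \<oplus>\<^bsub>A\<^esub> (r2 \<otimes>\<^bsub>A\<^esub> x2) | r0 r1 r2. r0 \<in> S0 \<and> r1 \<in> S1 \<and> r2 \<in> S2}"

definition skew_PBW :: "'a ring \<Rightarrow> 'a set \<Rightarrow> 'a \<Rightarrow> 'a \<Rightarrow> bool" where
  "skew_PBW A R x1 x2 \<longleftrightarrow>
     R \<subseteq> carrier A \<and> x1 \<in> carrier A \<and> x2 \<in> carrier A \<and>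
     left_free_basis A R (mon A x1 x2) \<and>
     (\<forall>xi\<in>{x1, x2}. \<forall>r\<in>R - {\<zero>\<^bsub>A\<^esub>}. \<exists>c\<in>R - {\<zero>\<^bsub>A\<^esub>}.
         xi \<otimes>\<^bsub>A\<^esub> r \<ominus>\<^bsub>A\<^esub> c \<otimes>\<^bsub>A\<^esub> xi \<in> R) \<and>
     (\<forall>xi\<in>{x1, x2}. \<forall>xj\<in>{x1, x2}. \<exists>c\<in>R - {\<zero>\<^bsub>A\<^esub>}.
         xj \<otimes>\<^bsub>A\<^esub> xi \<ominus>\<^bsub>A\<^esub> c \<otimes>\<^bsub>A\<^esub> xi \<otimes>\<^bsub>A\<^esub> xj \<in> lcomb A R R R x1 x2)"

text \<open>Graded skew PBW extension: bijective skew PBW extension with graded sigma_i,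
  degree-raising delta_i and homogeneous commutation relations with c_ij in R_0.
  (c_12 invertible in R is the bijectivity condition for i<j.)\<close>
definition graded_skew_PBW ::
    "'a ring \<Rightarrow> 'a set \<Rightarrow> 'a set \<Rightarrow> (nat \<Rightarrow> 'a set) \<Rightarrow> 'a \<Rightarrow> 'a \<Rightarrow> bool" where
  "graded_skew_PBW A K R Rg x1 x2 \<longleftrightarrow>
     graded_alg A K R Rg \<and> skew_PBW A R x1 x2 \<and>
     (\<forall>xi\<in>{x1, x2}. \<exists>\<sigma> \<delta>.
         (\<forall>r\<in>R. \<sigma> r \<in> R \<and> \<delta> r \<in> R \<and> xi \<otimes>\<^bsub>A\<^esub> r = \<sigma> r \<otimes>\<^bsub>A\<^esub> xi \<oplus>\<^bsub>A\<^esub> \<delta> r) \<and>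
         bij_betw \<sigma> R R \<and>
         (\<forall>m. \<forall>r\<in>Rg m. \<sigma> r \<in> Rg m \<and> \<delta> r \<in> Rg (Suc m))) \<and>
     (\<exists>c\<in>R. (\<exists>d\<in>R. c \<otimes>\<^bsub>A\<^esub> d = \<one>\<^bsub>A\<^esub> \<and> d \<otimes>\<^bsub>A\<^esub> c = \<one>\<^bsub>A\<^esub>) \<and>
         x2 \<otimes>\<^bsub>A\<^esub> x1 \<ominus>\<^bsub>A\<^esub> c \<otimes>\<^bsub>A\<^esub> x1 \<otimes>\<^bsub>A\<^esub> x2 \<in> lcomb A R R R x1 x2) \<and>
     (\<forall>xi\<in>{x1, x2}. \<forall>xj\<in>{x1, x2}. \<exists>c\<in>Rg 0 - {\<zero>\<^bsub>A\<^esub>}.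
         xj \<otimes>\<^bsub>A\<^esub> xi \<ominus>\<^bsub>A\<^esub> c \<otimes>\<^bsub>A\<^esub> xi \<otimes>\<^bsub>A\<^esub> xj \<in> lcomb A (Rg 2) (Rg 1) (Rg 1) x1 x2)"

inductive_set addcl :: "('a, 'b) ring_scheme \<Rightarrow> 'a set \<Rightarrow> 'a set" for A S where
  zero: "\<zero>\<^bsub>A\<^esub> \<in> addcl A S"
| incl: "s \<in> S \<Longrightarrow> s \<in> addcl A S"
| add:  "a \<in> addcl A S \<Longrightarrow> b \<in> addcl A S \<Longrightarrow> a \<oplus>\<^bsub>A\<^esub> b \<in> addcl A S"

definition kspan :: "('a, 'b) ring_scheme \<Rightarrow> 'a set \<Rightarrow> 'a set \<Rightarrow> 'a set" where
  "kspan A K S = addcl A {k \<otimes>\<^bsub>A\<^esub> s | k s. k \<in> K \<and> s \<in> S}"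

definition Agr :: "'a ring \<Rightarrow> 'a set \<Rightarrow> (nat \<Rightarrow> 'a set) \<Rightarrow> 'a \<Rightarrow> 'a \<Rightarrow> nat \<Rightarrow> 'a set" where
  "Agr A K Rg x1 x2 p = kspan A K
     {r \<otimes>\<^bsub>A\<^esub> mon A x1 x2 (a, b) | r t a b. r \<in> Rg t \<and> t + a + b = p}"

definition connected_graded :: "'a ring \<Rightarrow> 'a set \<Rightarrow> (nat \<Rightarrow> 'a set) \<Rightarrow> 'a \<Rightarrow> 'a \<Rightarrow> bool" where
  "connected_graded A K Rg x1 x2 \<longleftrightarrow> Agr A K Rg x1 x2 0 = K"

definition right_double_Ore :: "'a ring \<Rightarrow> 'a set \<Rightarrow> 'a set \<Rightarrow> 'a \<Rightarrow> 'a \<Rightarrow> bool" where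
  "right_double_Ore A K R x1 x2 \<longleftrightarrow>
     R \<subseteq> carrier A \<and> x1 \<in> carrier A \<and> x2 \<in> carrier A \<and>
     generate_ring A (R \<union> {x1, x2}) = carrier A \<and>
     (\<exists>p12\<in>K. \<exists>p11\<in>K. \<exists>\<tau>0\<in>R. \<exists>\<tau>1\<in>R. \<exists>\<tau>2\<in>R.
        x2 \<otimes>\<^bsub>A\<^esub> x1 = p12 \<otimes>\<^bsub>A\<^esub> x1 \<otimes>\<^bsub>A\<^esub> x2 \<oplus>\<^bsub>A\<^esub> p11 \<otimes>\<^bsub>A\<^esub> x1 \<otimes>\<^bsub>A\<^esub> x1
          \<oplus>\<^bsub>A\<^esub> \<tau>1 \<otimes>\<^bsub>A\<^esub> x1 \<oplus>\<^bsub>A\<^esub> \<tau>2 \<otimes>\<^bsub>A\<^esub> x2 \<oplus>\<^bsub>A\<^esub> \<tau>0) \<and>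
     left_free_basis A R (mon A x1 x2) \<and>
     (\<forall>xi\<in>{x1, x2}. \<forall>r\<in>R. xi \<otimes>\<^bsub>A\<^esub> r \<in> lcomb A R R R x1 x2)"

definition left_double_Ore :: "'a ring \<Rightarrow> 'a set \<Rightarrow> 'a set \<Rightarrow> 'a \<Rightarrow> 'a \<Rightarrow> bool" where
  "left_double_Ore A K R x1 x2 \<longleftrightarrow>
     R \<subseteq> carrier A \<and> x1 \<in> carrier A \<and> x2 \<in> carrier A \<and>
     generate_ring A (R \<union> {x1, x2}) = carrier A \<and>
     (\<exists>p12\<in>K. \<exists>p11\<in>K. \<exists>\<tau>0\<in>R. \<exists>\<tau>1\<in>R. \<exists>\<tau>2\<in>R.
        x1 \<otimes>\<^bsub>A\<^esub> x2 = p12 \<otimes>\<^bsub>A\<^esub> x2 \<otimes>\<^bsub>A\<^esub> x1 \<oplus>\<^bsub>A\<^esub> p11 \<otimes>\<^bsub>A\<^esub> x1 \<otimes>\<^bsub>A\<^esub> x1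
          \<oplus>\<^bsub>A\<^esub> x1 \<otimes>\<^bsub>A\<^esub> \<tau>1 \<oplus>\<^bsub>A\<^esub> x2 \<otimes>\<^bsub>A\<^esub> \<tau>2 \<oplus>\<^bsub>A\<^esub> \<tau>0) \<and>
     right_free_basis A R (mon A x1 x2) \<and>
     (\<forall>xi\<in>{x1, x2}. \<forall>r\<in>R. xi \<otimes>\<^bsub>A\<^esub> r \<in> lcomb A R R R x1 x2)"

text \<open>Graded double Ore extension: both, with all relations homogeneous (deg x1 = deg x2 = 1).\<close>
definition graded_double_Ore ::
    "'a ring \<Rightarrow> 'a set \<Rightarrow> 'a set \<Rightarrow> (nat \<Rightarrow> 'a set) \<Rightarrow> 'a \<Rightarrow> 'a \<Rightarrow> bool" where
  "graded_double_Ore A K R Rg x1 x2 \<longleftrightarrow>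
     right_double_Ore A K R x1 x2 \<and> left_double_Ore A K R x1 x2 \<and>
     (\<exists>p12\<in>K. \<exists>p11\<in>K. \<exists>\<tau>0\<in>Rg 2. \<exists>\<tau>1\<in>Rg 1. \<exists>\<tau>2\<in>Rg 1.
        x2 \<otimes>\<^bsub>A\<^esub> x1 = p12 \<otimes>\<^bsub>A\<^esub> x1 \<otimes>\<^bsub>A\<^esub> x2 \<oplus>\<^bsub>A\<^esub> p11 \<otimes>\<^bsub>A\<^esub> x1 \<otimes>\<^bsub>A\<^esub> x1
          \<oplus>\<^bsub>A\<^esub> \<tau>1 \<otimes>\<^bsub>A\<^esub> x1 \<oplus>\<^bsub>A\<^esub> \<tau>2 \<otimes>\<^bsub>A\<^esub> x2 \<oplus>\<^bsub>A\<^esub> \<tau>0) \<and>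
     (\<exists>p12\<in>K. \<exists>p11\<in>K. \<exists>\<tau>0\<in>Rg 2. \<exists>\<tau>1\<in>Rg 1. \<exists>\<tau>2\<in>Rg 1.
        x1 \<otimes>\<^bsub>A\<^esub> x2 = p12 \<otimes>\<^bsub>A\<^esub> x2 \<otimes>\<^bsub>A\<^esub> x1 \<oplus>\<^bsub>A\<^esub> p11 \<otimes>\<^bsub>A\<^esub> x1 \<otimes>\<^bsub>A\<^esub> x1
          \<oplus>\<^bsub>A\<^esub> x1 \<otimes>\<^bsub>A\<^esub> \<tau>1 \<oplus>\<^bsub>A\<^esub> x2 \<otimes>\<^bsub>A\<^esub> \<tau>2 \<oplus>\<^bsub>A\<^esub> \<tau>0) \<and>
     (\<forall>xi\<in>{x1, x2}. \<forall>m. \<forall>r\<in>Rg m. xi \<otimes>\<^bsub>A\<^esub> r \<in> lcomb A (Rg (Suc m)) (Rg m) (Rg m) x1 x2)"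

end

theory Submission
  imports Defs
begin


definition box :: "nat \<Rightarrow> (nat \<times> nat) set" where "box M = {..<M} \<times> {..<M}"

lemma finite_box[simp]: "finite (box M)" by (simp add: box_def)
lemma box_mono: "M \<le> M' \<Longrightarrow> box M \<subseteq> box M'" by (auto simp: box_def)
lemma in_box: "q \<in> box M \<longleftrightarrow> fst q < M \<and> snd q < M" by (cases q) (auto simp: box_def)

lemma addcl_mono: assumes "S \<subseteq> T" "e \<in> addcl A S" shows "e \<in> addcl A T"
  using assms(2) by induction (use assms(1) in \<open>auto intro: addcl.intros\<close>)

context ring begin

lemma addcl_carrier: assumes "S \<subseteq> carrier R" "e \<in> addcl R S" shows "e \<in> carrier R"
  using assms(2) by induction (use assms(1) in auto)

lemma addcl_lmult:
  assumes "y \<in> carrier R" "S \<subseteq> carrier R" "\<And>s. s \<in> S \<Longrightarrow> y \<otimes> s \<in> addcl R T"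
    and "e \<in> addcl R S"
  shows "y \<otimes> e \<in> addcl R T"
  using assms(4)
proof (induction rule: addcl.induct)
  case zero then show ?case using assms(1) by (simp add: addcl.zero)
next
  case (incl s) then show ?case using assms(3) by blast
next
  case (add a b)
  have "a \<in> carrier R" "b \<in> carrier R" using add.hyps addcl_carrier assms(2) by blast+
  then have "y \<otimes> (a \<oplus> b) = y \<otimes> a \<oplus> y \<otimes> b" using assms(1) by (simp add: r_distr)
  then show ?case using add.IH addcl.add by metis
qed

lemma addcl_finsum:
  assumes "finite I" "S \<subseteq> carrier R" "\<And>i. i \<in> I \<Longrightarrow> f i \<in> addcl R S"
  shows "finsum R f I \<in> addcl R S"
  using assms(1,3)
proof (induction I rule: finite_induct)
  case empty then show ?case by (simp add: addcl.zero)
next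
  case (insert x F)
  have fc: "f \<in> F \<rightarrow> carrier R" "f x \<in> carrier R"
    using insert.prems addcl_carrier[OF assms(2)] by auto
  then have "finsum R f (insert x F) = f x \<oplus> finsum R f F"
    using insert.hyps by (simp add: finsum_insert)
  moreover have "f x \<in> addcl R S" using insert.prems by simp
  moreover have "finsum R f F \<in> addcl R S" using insert by simp
  ultimately show ?case by (simp add: addcl.add)
qed

lemma eq_move: "b \<in> carrier R \<Longrightarrow> c \<in> carrier R \<Longrightarrow> a = b \<oplus> c \<Longrightarrow> b = a \<oplus> \<ominus> c"
  by (simp add: a_assoc r_neg)

end

locale rep = ring A for A (structure) +
  fixes R and h :: "'a \<Rightarrow> nat \<times> nat \<Rightarrow> 'a"
  assumes R_sub: "subring R A"
    and h_closed: "c \<in> R \<Longrightarrow> h c q \<in> carrier A"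
    and h_zero: "h \<zero> q = \<zero>"
    and h_add: "c \<in> R \<Longrightarrow> d \<in> R \<Longrightarrow> h (c \<oplus> d) q = h c q \<oplus> h d q"
begin

definition ok where "ok f M \<longleftrightarrow> (\<forall>q. f q \<in> R) \<and> (\<forall>q. q \<notin> box M \<longrightarrow> f q = \<zero>)"
definition val where "val f M = finsum A (\<lambda>q. h (f q) q) (box M)"

lemma R_carr: "R \<subseteq> carrier A" using subringE(1)[OF R_sub] .
lemma R_zero: "\<zero> \<in> R" using subringE(2)[OF R_sub] .
lemma R_one: "\<one> \<in> R" using subringE(3)[OF R_sub] .
lemma R_add: "a \<in> R \<Longrightarrow> b \<in> R \<Longrightarrow> a \<oplus> b \<in> R"
  using subringE(7)[OF R_sub] by blast
lemma R_mult: "a \<in> R \<Longrightarrow> b \<in> R \<Longrightarrow> a \<otimes> b \<in> R"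
  using subringE(6)[OF R_sub] by blast
lemma R_neg: "a \<in> R \<Longrightarrow> \<ominus> a \<in> R"
  using subringE(5)[OF R_sub] by blast

lemma val_extend:
  assumes "ok f M" "M \<le> M'" shows "val f M' = val f M"
  unfolding val_def
  apply (rule add.finprod_mono_neutral_cong_right)
  using assms box_mono[OF assms(2)] by (auto simp: ok_def h_zero h_closed Pi_def)

lemma val_closed: "ok f M \<Longrightarrow> val f M \<in> carrier A"
  unfolding val_def by (rule finsum_closed) (auto simp: ok_def h_closed)

lemma ok_add: "ok f M1 \<Longrightarrow> ok g M2 \<Longrightarrow> ok (\<lambda>q. f q \<oplus> g q) (max M1 M2)"
  unfolding ok_def using box_mono[of M1 "max M1 M2"] box_mono[of M2 "max M1 M2"]
  by (auto intro: R_add) (metis R_carr R_zero subset_iff zero_closed l_zero)+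

lemma val_add:
  assumes "ok f M1" "ok g M2"
  shows "val f M1 \<oplus> val g M2 = val (\<lambda>q. f q \<oplus> g q) (max M1 M2)"
proof -
  have "val f M1 = val f (max M1 M2)" "val g M2 = val g (max M1 M2)"
    using val_extend[OF assms(1), of "max M1 M2"] val_extend[OF assms(2), of "max M1 M2"] by simp_all
  moreover have "val f (max M1 M2) \<oplus> val g (max M1 M2) = val (\<lambda>q. f q \<oplus> g q) (max M1 M2)"
  proof -
    have fR: "\<And>q. f q \<in> R" and gR: "\<And>q. g q \<in> R" using assms unfolding ok_def by blast+
    have "val (\<lambda>q. f q \<oplus> g q) (max M1 M2) = finsum A (\<lambda>q. h (f q) q \<oplus> h (g q) q) (box (max M1 M2))"
      unfolding val_def by (rule finsum_cong) (simp_all add: h_add fR gR h_closed Pi_def)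
    also have "\<dots> = val f (max M1 M2) \<oplus> val g (max M1 M2)"
      unfolding val_def by (rule finsum_addf) (simp_all add: fR gR h_closed Pi_def)
    finally show ?thesis by simp
  qed
  ultimately show ?thesis by simp
qed

lemma h_if: "h (if b then c else \<zero>) q = (if b then h c q else \<zero>)" by (simp add: h_zero)

lemma ok_zero: "ok (\<lambda>q. \<zero>) 0" by (simp add: ok_def R_zero)
lemma val_zero: "val (\<lambda>q. \<zero>) M = \<zero>" by (simp add: val_def h_zero)

lemma ok_single: "c \<in> R \<Longrightarrow> ok (\<lambda>q. if q = p then c else \<zero>) (Suc (max (fst p) (snd p)))"
  by (auto simp: ok_def R_zero in_box)

lemma val_single: assumes "c \<in> R"
  shows "val (\<lambda>q. if q = p then c else \<zero>) (Suc (max (fst p) (snd p))) = h c p"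
proof -
  have pb: "p \<in> box (Suc (max (fst p) (snd p)))" by (simp add: in_box less_Suc_eq_le)
  have "val (\<lambda>q. if q = p then c else \<zero>) (Suc (max (fst p) (snd p)))
     = finsum A (\<lambda>q. if q = p then h c q else \<zero>) (box (Suc (max (fst p) (snd p))))"
    unfolding val_def by (rule finsum_cong) (simp_all add: h_if Pi_def h_closed assms)
  also have "\<dots> = h c p"
    by (rule add.finprod_singleton_swap[OF pb finite_box]) (simp add: Pi_def h_closed assms)
  finally show ?thesis .
qed

lemma ok_neg: "ok f M \<Longrightarrow> ok (\<lambda>q. \<ominus> f q) M"
  by (auto simp: ok_def R_neg)

lemma val_inj:
  assumes indep: "\<And>f M. ok f M \<Longrightarrow> val f M = \<zero> \<Longrightarrow> f q = \<zero>"
  assumes "ok f M" "ok g M'" "val f M = val g M'"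
  shows "f q = g q"
proof -
  have gn: "ok (\<lambda>q. \<ominus> g q) M'" using ok_neg assms(3) by blast
  have "val (\<lambda>q. f q \<oplus> \<ominus> g q) (max M M') = val f M \<oplus> val (\<lambda>q. \<ominus> g q) M'"
    using val_add[OF assms(2) gn] by simp
  also have "\<dots> = val g M' \<oplus> val (\<lambda>q. \<ominus> g q) M'" using assms by simp
  also have "\<dots> = val (\<lambda>q. g q \<oplus> \<ominus> g q) M'" using val_add[OF assms(3) gn] by simp
  also have "\<dots> = \<zero>"
  proof -
    have "(\<lambda>q. g q \<oplus> \<ominus> g q) = (\<lambda>q. \<zero>)" using assms(3) R_carr
      by (auto simp: ok_def intro!: ext r_neg)
    then show ?thesis by (simp add: val_zero)
  qed
  finally have z: "val (\<lambda>q. f q \<oplus> \<ominus> g q) (max M M') = \<zero>" .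
  have "f q \<oplus> \<ominus> g q = \<zero>"
    using indep[OF ok_add[OF assms(2) gn] z] .
  moreover have "f q \<in> carrier A" "g q \<in> carrier A" using assms(2,3) R_carr unfolding ok_def by blast+
  ultimately show ?thesis by (simp add: minus_eq[symmetric])

qed

lemma to_val:
  assumes "e \<in> addcl A {h c q | c q. c \<in> R \<and> P q}"
  shows "\<exists>f M. ok f M \<and> (\<forall>q. \<not> P q \<longrightarrow> f q = \<zero>) \<and> e = val f M"
  using assms
proof (induction rule: addcl.induct)
  case zero then show ?case
    by (intro exI[of _ "\<lambda>q. \<zero>"] exI[of _ 0]) (simp add: ok_zero val_zero)
next
  case (incl s)
  then obtain c p where cp: "c \<in> R" "P p" "s = h c p" by blast
  show ?case
    apply (rule exI[of _ "\<lambda>q. if q = p then c else \<zero>"])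
    apply (rule exI[of _ "Suc (max (fst p) (snd p))"])
    using ok_single[OF cp(1)] val_single[OF cp(1)] cp by auto
next
  case (add a b)
  then obtain f1 M1 f2 M2 where f: "ok f1 M1" "\<forall>q. \<not> P q \<longrightarrow> f1 q = \<zero>" "a = val f1 M1"
    "ok f2 M2" "\<forall>q. \<not> P q \<longrightarrow> f2 q = \<zero>" "b = val f2 M2" by blast
  show ?case
    apply (rule exI[of _ "\<lambda>q. f1 q \<oplus> f2 q"])
    apply (rule exI[of _ "max M1 M2"])
    using ok_add[OF f(1,4)] val_add[OF f(1,4)] f by auto
qed

lemma val_in_addcl:
  assumes "ok f M" "\<forall>q. \<not> P q \<longrightarrow> f q = \<zero>"
  shows "val f M \<in> addcl A {h c q | c q. c \<in> R \<and> P q}"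
  unfolding val_def
proof (rule addcl_finsum)
  show "{h c q | c q. c \<in> R \<and> P q} \<subseteq> carrier A" using h_closed by auto
  fix q assume "q \<in> box M"
  show "h (f q) q \<in> addcl A {h c q | c q. c \<in> R \<and> P q}"
  proof (cases "P q")
    case True then show ?thesis using assms(1) unfolding ok_def by (intro addcl.incl) blast
  next
    case False then have "f q = \<zero>" using assms(2) by blast
    then show ?thesis by (simp add: h_zero addcl.zero)
  qed
qed simp

end


definition dg :: "nat \<times> nat \<Rightarrow> nat" where "dg q = fst q + snd q"

locale pbw = ring A for A :: "'a ring" (structure) +
  fixes R x1 x2 s1 d1 s2 d2 c0 r0 r1 r2
  assumes R_sub: "subring R A"
    and x1c: "x1 \<in> carrier A" and x2c: "x2 \<in> carrier A"
    and lfb: "left_free_basis A R (mon A x1 x2)"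
    and s1: "\<And>r. r \<in> R \<Longrightarrow> s1 r \<in> R \<and> d1 r \<in> R \<and> x1 \<otimes> r = s1 r \<otimes> x1 \<oplus> d1 r"
    and s1b: "bij_betw s1 R R"
    and s2: "\<And>r. r \<in> R \<Longrightarrow> s2 r \<in> R \<and> d2 r \<in> R \<and> x2 \<otimes> r = s2 r \<otimes> x2 \<oplus> d2 r"
    and s2b: "bij_betw s2 R R"
    and c0R: "c0 \<in> R" and r0R: "r0 \<in> R" and r1R: "r1 \<in> R" and r2R: "r2 \<in> R"
    and rel: "x2 \<otimes> x1 = c0 \<otimes> x1 \<otimes> x2 \<oplus> (r0 \<oplus> r1 \<otimes> x1 \<oplus> r2 \<otimes> x2)"
    and c0cent: "\<And>a. a \<in> carrier A \<Longrightarrow> c0 \<otimes> a = a \<otimes> c0"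
begin

abbreviation mn where "mn q \<equiv> mon A x1 x2 q"

lemma R_carr: "R \<subseteq> carrier A" using subringE(1)[OF R_sub] .
lemma R_zero: "\<zero> \<in> R" using subringE(2)[OF R_sub] .
lemma R_one: "\<one> \<in> R" using subringE(3)[OF R_sub] .
lemma R_add: "a \<in> R \<Longrightarrow> b \<in> R \<Longrightarrow> a \<oplus> b \<in> R"
  using subringE(7)[OF R_sub] by blast
lemma R_mult: "a \<in> R \<Longrightarrow> b \<in> R \<Longrightarrow> a \<otimes> b \<in> R"
  using subringE(6)[OF R_sub] by blast
lemma R_neg: "a \<in> R \<Longrightarrow> \<ominus> a \<in> R"
  using subringE(5)[OF R_sub] by blast
lemma Rc: "a \<in> R \<Longrightarrow> a \<in> carrier A" using R_carr by blast

lemma mn_closed[simp]: "mn q \<in> carrier A" unfolding mon_def using x1c x2c by simp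
lemma mn_00: "mn (0,0) = \<one>" unfolding mon_def by simp
lemma mn_x1: "x1 \<otimes> mn (a,b) = mn (Suc a, b)"
proof -
  have "x1 \<otimes> mn (a,b) = (x1 \<otimes> x1 [^] a) \<otimes> x2 [^] b"
    unfolding mon_def using x1c x2c by (simp add: m_assoc)
  also have "\<dots> = x1 [^] Suc a \<otimes> x2 [^] b" by (simp only: nat_pow_Suc2[OF x1c])
  finally show ?thesis unfolding mon_def by simp
qed
lemma mn_0b: "mn (0,b) = x2 [^] b" unfolding mon_def using x2c by simp
lemma mn_x2: "x2 \<otimes> mn (0,b) = mn (0, Suc b)"
  unfolding mn_0b by (simp only: nat_pow_Suc2[OF x2c])
lemma mn_ab: "mn (a,b) = x1 [^] a \<otimes> mn (0,b)" unfolding mon_def using x1c x2c by simp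

sublocale L: rep A R "\<lambda>c q. c \<otimes> mn q"
  by (rule rep.intro[OF ring_axioms], rule rep_axioms.intro[OF R_sub]) (auto simp: Rc l_distr)
sublocale Rt: rep A R "\<lambda>c q. mn q \<otimes> c"
  by (rule rep.intro[OF ring_axioms], rule rep_axioms.intro[OF R_sub]) (auto simp: Rc r_distr)

definition LL where "LL P = addcl A {c \<otimes> mn q | c q. c \<in> R \<and> P q}"
definition RR where "RR P = addcl A {mn q \<otimes> c | c q. c \<in> R \<and> P q}"

lemma LL_gens: "{c \<otimes> mn q | c q. c \<in> R \<and> P q} \<subseteq> carrier A" using Rc by auto
lemma RR_gens: "{mn q \<otimes> c | c q. c \<in> R \<and> P q} \<subseteq> carrier A" using Rc by auto

lemma LL_carr: "e \<in> LL P \<Longrightarrow> e \<in> carrier A"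
  unfolding LL_def using addcl_carrier[OF LL_gens] by blast
lemma RR_carr: "e \<in> RR P \<Longrightarrow> e \<in> carrier A"
  unfolding RR_def using addcl_carrier[OF RR_gens] by blast
lemma LL_mono: "(\<And>q. P q \<Longrightarrow> Q q) \<Longrightarrow> e \<in> LL P \<Longrightarrow> e \<in> LL Q"
  unfolding LL_def by (erule addcl_mono[rotated]) blast
lemma RR_mono: "(\<And>q. P q \<Longrightarrow> Q q) \<Longrightarrow> e \<in> RR P \<Longrightarrow> e \<in> RR Q"
  unfolding RR_def by (erule addcl_mono[rotated]) blast
lemma LL_gen: "c \<in> R \<Longrightarrow> P q \<Longrightarrow> c \<otimes> mn q \<in> LL P"
  unfolding LL_def by (rule addcl.incl) blast
lemma RR_gen: "c \<in> R \<Longrightarrow> P q \<Longrightarrow> mn q \<otimes> c \<in> RR P"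
  unfolding RR_def by (rule addcl.incl) blast
lemma LL_add: "a \<in> LL P \<Longrightarrow> b \<in> LL P \<Longrightarrow> a \<oplus> b \<in> LL P"
  unfolding LL_def by (rule addcl.add)
lemma RR_add: "a \<in> RR P \<Longrightarrow> b \<in> RR P \<Longrightarrow> a \<oplus> b \<in> RR P"
  unfolding RR_def by (rule addcl.add)
lemma LL_zero: "\<zero> \<in> LL P" unfolding LL_def by (rule addcl.zero)
lemma RR_zero: "\<zero> \<in> RR P" unfolding RR_def by (rule addcl.zero)

lemma LL_lmult:
  assumes "y \<in> carrier A" "\<And>c q. c \<in> R \<Longrightarrow> P q \<Longrightarrow> y \<otimes> (c \<otimes> mn q) \<in> LL Q" "e \<in> LL P"
  shows "y \<otimes> e \<in> LL Q"
  using addcl_lmult[OF assms(1) LL_gens, of P] assms(2,3) unfolding LL_def by blast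
lemma RR_lmult:
  assumes "y \<in> carrier A" "\<And>c q. c \<in> R \<Longrightarrow> P q \<Longrightarrow> y \<otimes> (mn q \<otimes> c) \<in> RR Q" "e \<in> RR P"
  shows "y \<otimes> e \<in> RR Q"
  using addcl_lmult[OF assms(1) RR_gens, of P] assms(2,3) unfolding RR_def by blast

lemma LL_R: assumes "r \<in> R" "e \<in> LL P" shows "r \<otimes> e \<in> LL P"
proof (rule LL_lmult[OF Rc[OF assms(1)] _ assms(2)])
  fix c q assume "c \<in> R" "P q"
  then have "r \<otimes> (c \<otimes> mn q) = (r \<otimes> c) \<otimes> mn q" using assms(1) by (simp add: m_assoc Rc)
  then show "r \<otimes> (c \<otimes> mn q) \<in> LL P" using LL_gen R_mult assms(1) \<open>c \<in> R\<close> \<open>P q\<close> by simp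
qed

lemma LL_neg: "e \<in> LL P \<Longrightarrow> \<ominus> e \<in> LL P"
  using LL_R[OF R_neg[OF R_one]] LL_carr by (simp add: l_minus)

lemma RR_neg: "e \<in> RR P \<Longrightarrow> \<ominus> e \<in> RR P"
proof -
  assume e: "e \<in> RR P"
  have "\<ominus> \<one> \<otimes> e \<in> RR P"
  proof (rule RR_lmult[OF _ _ e])
    fix c q assume "c \<in> R" "P q"
    then show "\<ominus> \<one> \<otimes> (mn q \<otimes> c) \<in> RR P"
      using RR_gen[OF R_neg] by (simp add: l_minus r_minus Rc)
  qed simp
  then show ?thesis using RR_carr[OF e] by (simp add: l_minus)
qed

lemma RR_c0: "e \<in> RR P \<Longrightarrow> c0 \<otimes> e \<in> RR P"
proof (erule RR_lmult[OF Rc[OF c0R], rotated])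
  fix c q assume "c \<in> R" "P q"
  have "c0 \<otimes> (mn q \<otimes> c) = (c0 \<otimes> mn q) \<otimes> c"
    using \<open>c \<in> R\<close> c0R by (intro m_assoc[symmetric]) (auto simp: Rc)
  also have "\<dots> = (mn q \<otimes> c0) \<otimes> c" using c0cent[of "mn q"] by simp
  also have "\<dots> = mn q \<otimes> (c0 \<otimes> c)"
    using \<open>c \<in> R\<close> c0R by (intro m_assoc) (auto simp: Rc)
  finally have "c0 \<otimes> (mn q \<otimes> c) = mn q \<otimes> (c0 \<otimes> c)" .
  then show "c0 \<otimes> (mn q \<otimes> c) \<in> RR P" using RR_gen R_mult c0R \<open>c \<in> R\<close> \<open>P q\<close> by simp
qed

lemma RR_x1: "e \<in> RR (\<lambda>q. dg q < D) \<Longrightarrow> x1 \<otimes> e \<in> RR (\<lambda>q. dg q < Suc D)"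
proof (erule RR_lmult[OF x1c, rotated])
  fix c q assume "c \<in> R" "dg q < D"
  obtain a b where q: "q = (a,b)" by (cases q)
  have "x1 \<otimes> (mn q \<otimes> c) = mn (Suc a, b) \<otimes> c"
    using \<open>c \<in> R\<close> x1c by (simp add: q m_assoc[symmetric] Rc mn_x1)
  then show "x1 \<otimes> (mn q \<otimes> c) \<in> RR (\<lambda>q. dg q < Suc D)"
    using RR_gen[OF \<open>c \<in> R\<close>] \<open>dg q < D\<close> by (simp add: q dg_def)
qed

lemma LL_x1: "e \<in> LL (\<lambda>q. dg q < D) \<Longrightarrow> x1 \<otimes> e \<in> LL (\<lambda>q. dg q < Suc D)"
proof (erule LL_lmult[OF x1c, rotated])
  fix c q assume c: "c \<in> R" and "dg q < D"
  obtain a b where q: "q = (a,b)" by (cases q)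
  have "x1 \<otimes> (c \<otimes> mn q) = (x1 \<otimes> c) \<otimes> mn q"
    using c x1c by (simp add: m_assoc Rc)
  also have "\<dots> = (s1 c \<otimes> x1 \<oplus> d1 c) \<otimes> mn q" using s1[OF c] by simp
  also have "\<dots> = s1 c \<otimes> mn (Suc a, b) \<oplus> d1 c \<otimes> mn q"
    using s1[OF c] x1c by (simp add: l_distr m_assoc Rc q mn_x1)
  finally show "x1 \<otimes> (c \<otimes> mn q) \<in> LL (\<lambda>q. dg q < Suc D)"
    using s1[OF c] \<open>dg q < D\<close> by (auto simp: q dg_def intro!: LL_add LL_gen)
qed

lemma rel_w: "w \<in> carrier A \<Longrightarrow>
  x2 \<otimes> (x1 \<otimes> w) = c0 \<otimes> (x1 \<otimes> (x2 \<otimes> w)) \<oplus> (r0 \<otimes> w \<oplus> r1 \<otimes> (x1 \<otimes> w) \<oplus> r2 \<otimes> (x2 \<otimes> w))"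
proof -
  assume w: "w \<in> carrier A"
  have "x2 \<otimes> (x1 \<otimes> w) = (x2 \<otimes> x1) \<otimes> w" using w x1c x2c by (simp add: m_assoc)
  also have "\<dots> = (c0 \<otimes> x1 \<otimes> x2 \<oplus> (r0 \<oplus> r1 \<otimes> x1 \<oplus> r2 \<otimes> x2)) \<otimes> w" by (simp add: rel)
  also have "\<dots> = c0 \<otimes> (x1 \<otimes> (x2 \<otimes> w)) \<oplus> (r0 \<otimes> w \<oplus> r1 \<otimes> (x1 \<otimes> w) \<oplus> r2 \<otimes> (x2 \<otimes> w))"
    using w x1c x2c c0R r0R r1R r2R by (simp add: l_distr m_assoc Rc)
  finally show ?thesis .
qed

lemma x2_mn: "x2 \<otimes> mn (a,b) \<in> LL (\<lambda>q. dg q < a + b + 2)"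
proof (induction a)
  case 0
  have "x2 \<otimes> mn (0,b) = \<one> \<otimes> mn (0, Suc b)" by (simp add: mn_x2)
  then show ?case using LL_gen[OF R_one, of "\<lambda>q. dg q < 0 + b + 2" "(0, Suc b)"] by (simp add: dg_def)
next
  case (Suc a)
  let ?P = "\<lambda>q. dg q < Suc a + b + 2"
  have w: "mn (a,b) \<in> carrier A" by simp
  have e: "x2 \<otimes> mn (Suc a, b) = c0 \<otimes> (x1 \<otimes> (x2 \<otimes> mn (a,b))) \<oplus>
     (r0 \<otimes> mn (a,b) \<oplus> r1 \<otimes> mn (Suc a, b) \<oplus> r2 \<otimes> (x2 \<otimes> mn (a,b)))"
    using rel_w[OF w] by (simp add: mn_x1)
  have 1: "x1 \<otimes> (x2 \<otimes> mn (a,b)) \<in> LL ?P" using LL_x1[OF Suc.IH] by simp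
  have 2: "r0 \<otimes> mn (a,b) \<in> LL ?P" by (rule LL_gen[OF r0R]) (simp add: dg_def)
  have 3: "r1 \<otimes> mn (Suc a, b) \<in> LL ?P" by (rule LL_gen[OF r1R]) (simp add: dg_def)
  have 4: "r2 \<otimes> (x2 \<otimes> mn (a,b)) \<in> LL ?P"
    by (rule LL_R[OF r2R]) (rule LL_mono[OF _ Suc.IH], simp)
  show ?case unfolding e
    by (intro LL_add LL_R[OF c0R] 1 2 3 4)
qed

lemma LL_x2: "e \<in> LL (\<lambda>q. dg q < D) \<Longrightarrow> x2 \<otimes> e \<in> LL (\<lambda>q. dg q < Suc D)"
proof (erule LL_lmult[OF x2c, rotated])
  fix c q assume c: "c \<in> R" and "dg q < D"
  obtain a b where q: "q = (a,b)" by (cases q)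
  have "x2 \<otimes> (c \<otimes> mn q) = (x2 \<otimes> c) \<otimes> mn q"
    using c x2c by (simp add: m_assoc Rc)
  also have "\<dots> = (s2 c \<otimes> x2 \<oplus> d2 c) \<otimes> mn q" using s2[OF c] by simp
  also have "\<dots> = s2 c \<otimes> (x2 \<otimes> mn q) \<oplus> d2 c \<otimes> mn q"
    using s2[OF c] x2c by (simp add: l_distr m_assoc Rc)
  finally have eq: "x2 \<otimes> (c \<otimes> mn q) = s2 c \<otimes> (x2 \<otimes> mn q) \<oplus> d2 c \<otimes> mn q" .
  have "x2 \<otimes> mn q \<in> LL (\<lambda>q. dg q < Suc D)"
    using x2_mn[of a b] \<open>dg q < D\<close> by (auto simp: q dg_def elim!: LL_mono[rotated])
  then show "x2 \<otimes> (c \<otimes> mn q) \<in> LL (\<lambda>q. dg q < Suc D)"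
    unfolding eq using s2[OF c] \<open>dg q < D\<close> by (auto intro!: LL_add LL_R LL_gen simp: dg_def)
qed

lemma s1_pow_R: "c \<in> R \<Longrightarrow> (s1 ^^ k) c \<in> R" by (induction k) (auto simp: s1)
lemma s2_pow_R: "c \<in> R \<Longrightarrow> (s2 ^^ k) c \<in> R" by (induction k) (auto simp: s2)

lemma top_x2: "c \<in> R \<Longrightarrow> \<exists>l. l \<in> LL (\<lambda>q. dg q < b) \<and> mn (0,b) \<otimes> c = (s2 ^^ b) c \<otimes> mn (0,b) \<oplus> l"
proof (induction b)
  case 0
  then show ?case by (intro exI[of _ \<zero>]) (simp add: LL_zero Rc mn_00)
next
  case (Suc b)
  then obtain l where l: "l \<in> LL (\<lambda>q. dg q < b)" "mn (0,b) \<otimes> c = (s2 ^^ b) c \<otimes> mn (0,b) \<oplus> l" by blast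
  define t where "t = (s2 ^^ b) c"
  have t: "t \<in> R" using s2_pow_R Suc.prems t_def by simp
  have lc: "l \<in> carrier A" using LL_carr l(1) by blast
  have "mn (0, Suc b) \<otimes> c = x2 \<otimes> (mn (0,b) \<otimes> c)"
    using Suc.prems x2c by (simp add: m_assoc Rc mn_x2[symmetric])
  also have "\<dots> = x2 \<otimes> (t \<otimes> mn (0,b)) \<oplus> x2 \<otimes> l"
    using l(2) t lc x2c by (simp add: t_def[symmetric] r_distr Rc)
  also have "x2 \<otimes> (t \<otimes> mn (0,b)) = (x2 \<otimes> t) \<otimes> mn (0,b)" using t x2c by (simp add: m_assoc Rc)
  also have "\<dots> = (s2 t \<otimes> x2 \<oplus> d2 t) \<otimes> mn (0,b)" using s2[OF t] by simp
  also have "\<dots> = s2 t \<otimes> mn (0, Suc b) \<oplus> d2 t \<otimes> mn (0,b)"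
    using s2[OF t] x2c by (simp add: l_distr m_assoc Rc mn_x2)
  finally have "mn (0, Suc b) \<otimes> c = s2 t \<otimes> mn (0, Suc b) \<oplus> (d2 t \<otimes> mn (0,b) \<oplus> x2 \<otimes> l)"
    using s2[OF t] lc x2c by (simp add: a_assoc Rc)
  moreover have "d2 t \<otimes> mn (0,b) \<oplus> x2 \<otimes> l \<in> LL (\<lambda>q. dg q < Suc b)"
    using s2[OF t] LL_x2[OF l(1)] by (auto intro!: LL_add LL_gen simp: dg_def)
  moreover have "s2 t = (s2 ^^ Suc b) c" by (simp add: t_def)
  ultimately show ?case by auto
qed

lemma top_x1: "t \<in> R \<Longrightarrow> l \<in> LL (\<lambda>q. dg q < a + b) \<Longrightarrow>
  \<exists>l'. l' \<in> LL (\<lambda>q. dg q < k + a + b) \<and> x1 [^] k \<otimes> (t \<otimes> mn (a,b) \<oplus> l) = (s1 ^^ k) t \<otimes> mn (k + a, b) \<oplus> l'"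
proof (induction k)
  case 0
  then show ?case by (intro exI[of _ l]) (simp add: LL_carr Rc)
next
  case (Suc k)
  then obtain l' where l': "l' \<in> LL (\<lambda>q. dg q < k + a + b)"
    "x1 [^] k \<otimes> (t \<otimes> mn (a,b) \<oplus> l) = (s1 ^^ k) t \<otimes> mn (k + a, b) \<oplus> l'" by blast
  define T where "T = (s1 ^^ k) t"
  have T: "T \<in> R" using s1_pow_R Suc.prems T_def by simp
  have lc: "l \<in> carrier A" "l' \<in> carrier A" using LL_carr l'(1) Suc.prems by blast+
  have "x1 [^] Suc k \<otimes> (t \<otimes> mn (a,b) \<oplus> l) = (x1 \<otimes> x1 [^] k) \<otimes> (t \<otimes> mn (a,b) \<oplus> l)"
    by (simp only: nat_pow_Suc2[OF x1c])
  also have "\<dots> = x1 \<otimes> (x1 [^] k \<otimes> (t \<otimes> mn (a,b) \<oplus> l))"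
    using x1c lc Suc.prems by (simp add: m_assoc Rc)
  also have "\<dots> = x1 \<otimes> (T \<otimes> mn (k + a, b)) \<oplus> x1 \<otimes> l'"
    using l'(2) T lc x1c by (simp add: T_def[symmetric] r_distr Rc)
  also have "x1 \<otimes> (T \<otimes> mn (k + a, b)) = (x1 \<otimes> T) \<otimes> mn (k + a, b)" using T x1c by (simp add: m_assoc Rc)
  also have "\<dots> = (s1 T \<otimes> x1 \<oplus> d1 T) \<otimes> mn (k + a, b)" using s1[OF T] by simp
  also have "\<dots> = s1 T \<otimes> mn (Suc k + a, b) \<oplus> d1 T \<otimes> mn (k + a, b)"
    using s1[OF T] x1c by (simp add: l_distr m_assoc Rc mn_x1)
  finally have "x1 [^] Suc k \<otimes> (t \<otimes> mn (a,b) \<oplus> l) = s1 T \<otimes> mn (Suc k + a, b) \<oplus> (d1 T \<otimes> mn (k + a, b) \<oplus> x1 \<otimes> l')"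
    using s1[OF T] lc x1c by (simp add: a_assoc Rc)
  moreover have "d1 T \<otimes> mn (k + a, b) \<oplus> x1 \<otimes> l' \<in> LL (\<lambda>q. dg q < Suc k + a + b)"
    using s1[OF T] LL_x1[OF l'(1)] by (auto intro!: LL_add LL_gen simp: dg_def)
  moreover have "s1 T = (s1 ^^ Suc k) t" by (simp add: T_def)
  ultimately show ?case by auto
qed

definition sig where "sig q c = (s1 ^^ fst q) ((s2 ^^ snd q) c)"

lemma sig_R: "c \<in> R \<Longrightarrow> sig q c \<in> R" unfolding sig_def using s1_pow_R s2_pow_R by blast

lemma top: "c \<in> R \<Longrightarrow> \<exists>l. l \<in> LL (\<lambda>q'. dg q' < dg q) \<and> mn q \<otimes> c = sig q c \<otimes> mn q \<oplus> l"
proof -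
  assume c: "c \<in> R"
  obtain a b where q: "q = (a,b)" by (cases q)
  obtain l where l: "l \<in> LL (\<lambda>q. dg q < b)" "mn (0,b) \<otimes> c = (s2 ^^ b) c \<otimes> mn (0,b) \<oplus> l"
    using top_x2[OF c] by blast
  have l0: "l \<in> LL (\<lambda>q. dg q < 0 + b)" using l(1) by simp
  obtain l' where l': "l' \<in> LL (\<lambda>q. dg q < a + 0 + b)"
    "x1 [^] a \<otimes> ((s2 ^^ b) c \<otimes> mn (0,b) \<oplus> l) = (s1 ^^ a) ((s2 ^^ b) c) \<otimes> mn (a + 0, b) \<oplus> l'"
    using top_x1[OF s2_pow_R[OF c] l0] by blast
  have mq: "mn q = x1 [^] a \<otimes> mn (0,b)" by (simp only: q mn_ab[of a b])
  have "mn q \<otimes> c = x1 [^] a \<otimes> (mn (0,b) \<otimes> c)"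
    unfolding mq using c x1c by (simp add: m_assoc Rc)
  also have "\<dots> = x1 [^] a \<otimes> ((s2 ^^ b) c \<otimes> mn (0,b) \<oplus> l)" by (simp only: l(2))
  also have "\<dots> = (s1 ^^ a) ((s2 ^^ b) c) \<otimes> mn (a + 0, b) \<oplus> l'" by (rule l'(2))
  also have "\<dots> = sig q c \<otimes> mn q \<oplus> l'" by (simp add: q sig_def)
  finally have E: "mn q \<otimes> c = sig q c \<otimes> mn q \<oplus> l'" .
  have "l' \<in> LL (\<lambda>q'. dg q' < dg q)" using l'(1) by (simp add: q dg_def)
  then show ?thesis using E by blast
qed

end


context pbw begin

lemma sur1: "r \<in> R \<Longrightarrow> \<exists>r'\<in>R. s1 r' = r" using s1b unfolding bij_betw_def by (metis imageE)
lemma sur2: "r \<in> R \<Longrightarrow> \<exists>r'\<in>R. s2 r' = r" using s2b unfolding bij_betw_def by (metis imageE)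

lemma back1: assumes "r \<in> R" "w \<in> carrier A"
  shows "s1 r \<otimes> (x1 \<otimes> w) = x1 \<otimes> (r \<otimes> w) \<oplus> \<ominus> (d1 r \<otimes> w)"
proof -
  have sR: "s1 r \<in> R" "d1 r \<in> R" using s1[OF assms(1)] by auto
  have e: "s1 r \<otimes> x1 = x1 \<otimes> r \<oplus> \<ominus> d1 r"
    by (rule eq_move) (use s1[OF assms(1)] x1c in \<open>auto simp: Rc\<close>)
  have "s1 r \<otimes> (x1 \<otimes> w) = (s1 r \<otimes> x1) \<otimes> w"
    using sR x1c assms(2) by (simp add: m_assoc Rc)
  also have "\<dots> = (x1 \<otimes> r \<oplus> \<ominus> d1 r) \<otimes> w" by (simp only: e)
  also have "\<dots> = (x1 \<otimes> r) \<otimes> w \<oplus> (\<ominus> d1 r) \<otimes> w"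
    by (rule l_distr) (use sR x1c assms in \<open>auto simp: Rc\<close>)
  also have "\<dots> = x1 \<otimes> (r \<otimes> w) \<oplus> \<ominus> (d1 r \<otimes> w)"
    using sR x1c assms by (simp add: m_assoc l_minus Rc)
  finally show ?thesis .
qed

lemma back2: assumes "r \<in> R" "w \<in> carrier A"
  shows "s2 r \<otimes> (x2 \<otimes> w) = x2 \<otimes> (r \<otimes> w) \<oplus> \<ominus> (d2 r \<otimes> w)"
proof -
  have sR: "s2 r \<in> R" "d2 r \<in> R" using s2[OF assms(1)] by auto
  have e: "s2 r \<otimes> x2 = x2 \<otimes> r \<oplus> \<ominus> d2 r"
    by (rule eq_move) (use s2[OF assms(1)] x2c in \<open>auto simp: Rc\<close>)
  have "s2 r \<otimes> (x2 \<otimes> w) = (s2 r \<otimes> x2) \<otimes> w"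
    using sR x2c assms(2) by (simp add: m_assoc Rc)
  also have "\<dots> = (x2 \<otimes> r \<oplus> \<ominus> d2 r) \<otimes> w" by (simp only: e)
  also have "\<dots> = (x2 \<otimes> r) \<otimes> w \<oplus> (\<ominus> d2 r) \<otimes> w"
    by (rule l_distr) (use sR x2c assms in \<open>auto simp: Rc\<close>)
  also have "\<dots> = x2 \<otimes> (r \<otimes> w) \<oplus> \<ominus> (d2 r \<otimes> w)"
    using sR x2c assms by (simp add: m_assoc l_minus Rc)
  finally show ?thesis .
qed

lemma mnc_x1: "c \<in> R \<Longrightarrow> mn (Suc a, b) \<otimes> c = x1 \<otimes> (mn (a,b) \<otimes> c)"
  using x1c by (simp add: mn_x1[symmetric] m_assoc Rc)
lemma mnc_x2: "c \<in> R \<Longrightarrow> mn (0, Suc b) \<otimes> c = x2 \<otimes> (mn (0,b) \<otimes> c)"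
  using x2c by (simp add: mn_x2[symmetric] m_assoc Rc)

lemma Q: "\<forall>e \<in> RR (\<lambda>q. dg q < D). (\<forall>r\<in>R. r \<otimes> e \<in> RR (\<lambda>q. dg q < D)) \<and> x2 \<otimes> e \<in> RR (\<lambda>q. dg q < Suc D)"
proof (induction D)
  case 0
  show ?case
  proof (intro ballI conjI)
    fix e assume e: "e \<in> RR (\<lambda>q. dg q < 0)"
    show "x2 \<otimes> e \<in> RR (\<lambda>q. dg q < Suc 0)" by (rule RR_lmult[OF x2c _ e]) simp
    fix r assume "r \<in> R"
    show "r \<otimes> e \<in> RR (\<lambda>q. dg q < 0)" by (rule RR_lmult[OF Rc[OF \<open>r \<in> R\<close>] _ e]) simp
  qed
next
  case (Suc D)
  have IHr: "\<And>r e. r \<in> R \<Longrightarrow> e \<in> RR (\<lambda>q. dg q < D) \<Longrightarrow> r \<otimes> e \<in> RR (\<lambda>q. dg q < D)"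
    using Suc.IH by blast
  have IHx: "\<And>e. e \<in> RR (\<lambda>q. dg q < D) \<Longrightarrow> x2 \<otimes> e \<in> RR (\<lambda>q. dg q < Suc D)"
    using Suc.IH by blast
  have mono: "\<And>e. e \<in> RR (\<lambda>q. dg q < D) \<Longrightarrow> e \<in> RR (\<lambda>q. dg q < Suc D)"
    by (erule RR_mono[rotated]) simp
  have mono2: "\<And>e. e \<in> RR (\<lambda>q. dg q < Suc D) \<Longrightarrow> e \<in> RR (\<lambda>q. dg q < Suc (Suc D))"
    by (erule RR_mono[rotated]) simp
  have rpart: "\<And>r e. r \<in> R \<Longrightarrow> e \<in> RR (\<lambda>q. dg q < Suc D) \<Longrightarrow> r \<otimes> e \<in> RR (\<lambda>q. dg q < Suc D)"
  proof -
    fix r e assume r: "r \<in> R" and e: "e \<in> RR (\<lambda>q. dg q < Suc D)"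
    show "r \<otimes> e \<in> RR (\<lambda>q. dg q < Suc D)"
    proof (rule RR_lmult[OF Rc[OF r] _ e])
      fix c q assume c: "c \<in> R" and dq: "dg q < Suc D"
      obtain a b where q: "q = (a,b)" by (cases q)
      show "r \<otimes> (mn q \<otimes> c) \<in> RR (\<lambda>q. dg q < Suc D)"
      proof (cases a)
        case (Suc a')
        define w where "w = mn (a',b) \<otimes> c"
        have w: "w \<in> RR (\<lambda>q. dg q < D)" unfolding w_def
          by (rule RR_gen[OF c]) (use dq in \<open>simp add: q Suc dg_def\<close>)
        have wc: "w \<in> carrier A" using RR_carr[OF w] .
        obtain r' where r': "r' \<in> R" "s1 r' = r" using sur1[OF r] by blast
        have "r \<otimes> (mn q \<otimes> c) = x1 \<otimes> (r' \<otimes> w) \<oplus> \<ominus> (d1 r' \<otimes> w)"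
          using back1[OF r'(1) wc] r'(2) mnc_x1[OF c] by (simp add: q Suc w_def)
        moreover have "x1 \<otimes> (r' \<otimes> w) \<in> RR (\<lambda>q. dg q < Suc D)"
          by (rule RR_x1[OF IHr[OF r'(1) w]])
        moreover have "\<ominus> (d1 r' \<otimes> w) \<in> RR (\<lambda>q. dg q < Suc D)"
          using s1[OF r'(1)] by (intro RR_neg mono IHr w) simp
        ultimately show ?thesis by (simp add: RR_add)
      next
        case 0
        show ?thesis
        proof (cases b)
          case 0
          have "r \<otimes> (mn q \<otimes> c) = mn q \<otimes> (r \<otimes> c)"
            using r c by (simp add: q \<open>a = 0\<close> 0 mn_00 Rc)
          then show ?thesis using RR_gen[OF R_mult[OF r c]] dq by simp
        next
          case (Suc b')
          define w where "w = mn (0,b') \<otimes> c"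
          have w: "w \<in> RR (\<lambda>q. dg q < D)" unfolding w_def
            by (rule RR_gen[OF c]) (use dq in \<open>simp add: q Suc \<open>a = 0\<close> dg_def\<close>)
          have wc: "w \<in> carrier A" using RR_carr[OF w] .
          obtain r' where r': "r' \<in> R" "s2 r' = r" using sur2[OF r] by blast
          have "r \<otimes> (mn q \<otimes> c) = x2 \<otimes> (r' \<otimes> w) \<oplus> \<ominus> (d2 r' \<otimes> w)"
            using back2[OF r'(1) wc] r'(2) mnc_x2[OF c] by (simp add: q Suc \<open>a = 0\<close> w_def)
          moreover have "x2 \<otimes> (r' \<otimes> w) \<in> RR (\<lambda>q. dg q < Suc D)"
            by (rule IHx[OF IHr[OF r'(1) w]])
          moreover have "\<ominus> (d2 r' \<otimes> w) \<in> RR (\<lambda>q. dg q < Suc D)"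
            using s2[OF r'(1)] by (intro RR_neg mono IHr w) simp
          ultimately show ?thesis by (simp add: RR_add)
        qed
      qed
    qed
  qed
  have xpart: "\<And>e. e \<in> RR (\<lambda>q. dg q < Suc D) \<Longrightarrow> x2 \<otimes> e \<in> RR (\<lambda>q. dg q < Suc (Suc D))"
  proof -
    fix e assume e: "e \<in> RR (\<lambda>q. dg q < Suc D)"
    show "x2 \<otimes> e \<in> RR (\<lambda>q. dg q < Suc (Suc D))"
    proof (rule RR_lmult[OF x2c _ e])
      fix c q assume c: "c \<in> R" and dq: "dg q < Suc D"
      obtain a b where q: "q = (a,b)" by (cases q)
      show "x2 \<otimes> (mn q \<otimes> c) \<in> RR (\<lambda>q. dg q < Suc (Suc D))"
      proof (cases a)
        case 0
        have "x2 \<otimes> (mn q \<otimes> c) = mn (0, Suc b) \<otimes> c" using mnc_x2[OF c] by (simp add: q 0)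
        then show ?thesis using RR_gen[OF c, of "\<lambda>q. dg q < Suc (Suc D)" "(0, Suc b)"] dq
          by (simp add: q 0 dg_def)
      next
        case (Suc a')
        define w where "w = mn (a',b) \<otimes> c"
        have w: "w \<in> RR (\<lambda>q. dg q < D)" unfolding w_def
          by (rule RR_gen[OF c]) (use dq in \<open>simp add: q Suc dg_def\<close>)
        have wc: "w \<in> carrier A" using RR_carr[OF w] .
        have eq: "x2 \<otimes> (mn q \<otimes> c) = c0 \<otimes> (x1 \<otimes> (x2 \<otimes> w)) \<oplus> (r0 \<otimes> w \<oplus> r1 \<otimes> (x1 \<otimes> w) \<oplus> r2 \<otimes> (x2 \<otimes> w))"
          using rel_w[OF wc] mnc_x1[OF c] by (simp add: q Suc w_def)
        have 1: "c0 \<otimes> (x1 \<otimes> (x2 \<otimes> w)) \<in> RR (\<lambda>q. dg q < Suc (Suc D))"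
          by (intro RR_c0 RR_x1 IHx w)
        have 2: "r0 \<otimes> w \<in> RR (\<lambda>q. dg q < Suc (Suc D))"
          by (intro mono2 rpart r0R mono w)
        have 3: "r1 \<otimes> (x1 \<otimes> w) \<in> RR (\<lambda>q. dg q < Suc (Suc D))"
          by (intro mono2 rpart r1R RR_x1 w)
        have 4: "r2 \<otimes> (x2 \<otimes> w) \<in> RR (\<lambda>q. dg q < Suc (Suc D))"
          by (intro mono2 rpart r2R IHx w)
        show ?thesis unfolding eq by (intro RR_add 1 2 3 4)
      qed
    qed
  qed
  show ?case using rpart xpart by blast
qed

lemma RR_R: "r \<in> R \<Longrightarrow> e \<in> RR (\<lambda>q. dg q < D) \<Longrightarrow> r \<otimes> e \<in> RR (\<lambda>q. dg q < D)"
  using Q by blast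

lemma right_span: assumes "a \<in> carrier A"
  shows "\<exists>N c. (\<forall>p. c p \<in> R) \<and> a = finsum A (\<lambda>p. mn p \<otimes> c p) ({..<N} \<times> {..<N})"
proof -
  obtain N c where c: "\<forall>p. c p \<in> R" "a = finsum A (\<lambda>p. c p \<otimes> mn p) ({..<N} \<times> {..<N})"
    using lfb assms unfolding left_free_basis_def by blast
  have "a \<in> RR (\<lambda>q. True)" unfolding c(2) RR_def
  proof (rule addcl_finsum[OF _ RR_gens])
    fix p
    have "mn p \<otimes> \<one> \<in> RR (\<lambda>q. dg q < Suc (dg p))" by (rule RR_gen[OF R_one]) simp
    then have "c p \<otimes> (mn p \<otimes> \<one>) \<in> RR (\<lambda>q. dg q < Suc (dg p))" using RR_R c(1) by blast
    then have "c p \<otimes> mn p \<in> RR (\<lambda>q. True)" using c(1) Rc by (auto elim: RR_mono[rotated])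
    then show "c p \<otimes> mn p \<in> addcl A {mn q \<otimes> c |c q. c \<in> R \<and> True}" unfolding RR_def .
  qed simp
  then obtain f M where "Rt.ok f M" "a = Rt.val f M"
    using Rt.to_val[of a "\<lambda>q. True"] unfolding RR_def by auto
  then show ?thesis unfolding Rt.val_def Rt.ok_def box_def by blast
qed

lemma gen_ring: "generate_ring A (R \<union> {x1, x2}) = carrier A"
proof
  show "generate_ring A (R \<union> {x1, x2}) \<subseteq> carrier A"
    by (rule generate_ring_incl) (use R_carr x1c x2c in auto)
  show "carrier A \<subseteq> generate_ring A (R \<union> {x1, x2})"
  proof
    fix a assume a: "a \<in> carrier A"
    define G where "G = generate_ring A (R \<union> {x1, x2})"
    have sub: "subring G A" unfolding G_def by (rule generate_ring_is_subring) (use R_carr x1c x2c in auto)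
    have inc: "R \<union> {x1, x2} \<subseteq> G" unfolding G_def by (auto intro: generate_ring.incl)
    have pw: "\<And>x (n::nat). x \<in> G \<Longrightarrow> x [^] n \<in> G"
    proof -
      fix x and n :: nat assume x: "x \<in> G"
      show "x [^] n \<in> G"
      proof (induction n)
        case 0 show ?case using subringE(3)[OF sub] by simp
      next
        case (Suc n) then show ?case using subringE(6)[OF sub] x by simp
      qed
    qed
    have mnG: "\<And>p. mn p \<in> G" unfolding mon_def using pw inc subringE(6)[OF sub] by auto
    have cl: "\<And>e. e \<in> addcl A G \<Longrightarrow> e \<in> G"
    proof -
      fix e assume "e \<in> addcl A G"
      then show "e \<in> G" by (induction rule: addcl.induct) (auto simp: subringE(2)[OF sub] subringE(7)[OF sub])
    qed
    obtain N c where c: "\<forall>p. c p \<in> R" "a = finsum A (\<lambda>p. c p \<otimes> mn p) ({..<N} \<times> {..<N})"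
      using lfb a unfolding left_free_basis_def by blast
    have "a \<in> addcl A G" unfolding c(2)
    proof (rule addcl_finsum)
      show "G \<subseteq> carrier A" using subringE(1)[OF sub] .
      fix p show "c p \<otimes> mn p \<in> addcl A G"
      proof (rule addcl.incl)
        have "c p \<in> G" using c(1) inc by blast
        then show "c p \<otimes> mn p \<in> G" using mnG subringE(6)[OF sub] by blast
      qed
    qed simp
    then show "a \<in> generate_ring A (R \<union> {x1, x2})" using cl G_def by blast
  qed
qed

end


context pbw begin

lemma indep: "L.ok f M \<Longrightarrow> L.val f M = \<zero> \<Longrightarrow> f q = \<zero>"
proof -
  assume ok: "L.ok f M" and v: "L.val f M = \<zero>"
  show "f q = \<zero>"
  proof (cases "q \<in> box M")
    case True
    have "\<forall>p\<in>{..<M} \<times> {..<M}. f p = \<zero>"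
      using lfb ok v unfolding left_free_basis_def L.ok_def L.val_def box_def by blast
    then show ?thesis using True unfolding box_def by blast
  next
    case False then show ?thesis using ok unfolding L.ok_def by blast
  qed
qed

lemma two_eq:
  assumes "a \<in> R" "b \<in> R" "a' \<in> R" "b' \<in> R" "p \<noteq> (0,0)"
    and eq: "a \<otimes> mn p \<oplus> b \<otimes> mn (0,0) = a' \<otimes> mn p \<oplus> b' \<otimes> mn (0,0)"
  shows "a = a' \<and> b = b'"
proof -
  define F where "F = (\<lambda>a b q. (if q = p then a else \<zero>) \<oplus> (if q = (0,0) then b else \<zero>))"
  define MM where "MM = max (Suc (max (fst p) (snd p))) (Suc (max (fst (0::nat,0::nat)) (snd (0::nat,0::nat))))"
  have okF: "\<And>a b. a \<in> R \<Longrightarrow> b \<in> R \<Longrightarrow> L.ok (F a b) MM"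
    unfolding F_def MM_def by (rule L.ok_add[OF L.ok_single L.ok_single])
  have valF: "\<And>a b. a \<in> R \<Longrightarrow> b \<in> R \<Longrightarrow> L.val (F a b) MM = a \<otimes> mn p \<oplus> b \<otimes> mn (0,0)"
  proof -
    fix a b assume ab: "a \<in> R" "b \<in> R"
    show "L.val (F a b) MM = a \<otimes> mn p \<oplus> b \<otimes> mn (0,0)"
      using L.val_add[OF L.ok_single[OF ab(1), of p] L.ok_single[OF ab(2), of "(0,0)"]]
        L.val_single[OF ab(1), of p] L.val_single[OF ab(2), of "(0,0)"]
      unfolding F_def MM_def by simp
  qed
  have e: "\<And>q. F a b q = F a' b' q"
    by (rule L.val_inj[OF indep okF[OF assms(1,2)] okF[OF assms(3,4)]])
       (use valF assms eq in auto)
  have "F a b p = F a' b' p" "F a b (0,0) = F a' b' (0,0)" using e by blast+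
  then show ?thesis using assms(5) Rc assms(1-4) unfolding F_def by auto
qed

lemma mn_10: "mn (Suc 0,0) = x1" using mn_x1[of 0 0] x1c by (simp add: mn_00)
lemma mn_01: "mn (0,Suc 0) = x2" using mn_x2[of 0] x2c by (simp add: mn_00)

lemma s1_zero: "s1 \<zero> = \<zero>"
proof -
  have sR: "s1 \<zero> \<in> R" "d1 \<zero> \<in> R" using s1[OF R_zero] by auto
  have e: "s1 \<zero> \<otimes> x1 \<oplus> d1 \<zero> = \<zero>" using s1[OF R_zero] x1c r_null by metis
  have "s1 \<zero> \<otimes> mn (Suc 0,0) \<oplus> d1 \<zero> \<otimes> mn (0,0) = \<zero> \<otimes> mn (Suc 0,0) \<oplus> \<zero> \<otimes> mn (0,0)"
    using e sR x1c by (simp add: mn_10 mn_00 Rc)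
  from two_eq[OF sR R_zero R_zero _ this] show ?thesis by simp
qed

lemma s1_add: assumes "r \<in> R" "s \<in> R" shows "s1 (r \<oplus> s) = s1 r \<oplus> s1 s \<and> d1 (r \<oplus> s) = d1 r \<oplus> d1 s"
proof -
  have rs: "r \<oplus> s \<in> R" using R_add assms by blast
  have m: "s1 (r \<oplus> s) \<in> R" "d1 (r \<oplus> s) \<in> R" "s1 r \<oplus> s1 s \<in> R" "d1 r \<oplus> d1 s \<in> R"
    using s1[OF rs] s1[OF assms(1)] s1[OF assms(2)] R_add by auto
  have "s1 (r \<oplus> s) \<otimes> mn (Suc 0,0) \<oplus> d1 (r \<oplus> s) \<otimes> mn (0,0) = x1 \<otimes> (r \<oplus> s)"
    using s1[OF rs] by (simp add: mn_10 mn_00 Rc)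
  also have "\<dots> = x1 \<otimes> r \<oplus> x1 \<otimes> s" using assms x1c by (simp add: r_distr Rc)
  also have "\<dots> = (s1 r \<oplus> s1 s) \<otimes> mn (Suc 0,0) \<oplus> (d1 r \<oplus> d1 s) \<otimes> mn (0,0)"
    using s1[OF assms(1)] s1[OF assms(2)] x1c by (simp add: mn_10 mn_00 Rc l_distr a_ac)
  finally have E: "s1 (r \<oplus> s) \<otimes> mn (Suc 0,0) \<oplus> d1 (r \<oplus> s) \<otimes> mn (0,0) =
     (s1 r \<oplus> s1 s) \<otimes> mn (Suc 0,0) \<oplus> (d1 r \<oplus> d1 s) \<otimes> mn (0,0)" .
  show ?thesis using two_eq[OF m _ E] by simp
qed

lemma s2_zero: "s2 \<zero> = \<zero>"
proof -
  have sR: "s2 \<zero> \<in> R" "d2 \<zero> \<in> R" using s2[OF R_zero] by auto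
  have e: "s2 \<zero> \<otimes> x2 \<oplus> d2 \<zero> = \<zero>" using s2[OF R_zero] x2c r_null by metis
  have "s2 \<zero> \<otimes> mn (0,Suc 0) \<oplus> d2 \<zero> \<otimes> mn (0,0) = \<zero> \<otimes> mn (0,Suc 0) \<oplus> \<zero> \<otimes> mn (0,0)"
    using e sR x2c by (simp add: mn_01 mn_00 Rc)
  from two_eq[OF sR R_zero R_zero _ this] show ?thesis by simp
qed

lemma s2_add: assumes "r \<in> R" "s \<in> R" shows "s2 (r \<oplus> s) = s2 r \<oplus> s2 s \<and> d2 (r \<oplus> s) = d2 r \<oplus> d2 s"
proof -
  have rs: "r \<oplus> s \<in> R" using R_add assms by blast
  have m: "s2 (r \<oplus> s) \<in> R" "d2 (r \<oplus> s) \<in> R" "s2 r \<oplus> s2 s \<in> R" "d2 r \<oplus> d2 s \<in> R"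
    using s2[OF rs] s2[OF assms(1)] s2[OF assms(2)] R_add by auto
  have "s2 (r \<oplus> s) \<otimes> mn (0,Suc 0) \<oplus> d2 (r \<oplus> s) \<otimes> mn (0,0) = x2 \<otimes> (r \<oplus> s)"
    using s2[OF rs] by (simp add: mn_01 mn_00 Rc)
  also have "\<dots> = x2 \<otimes> r \<oplus> x2 \<otimes> s" using assms x2c by (simp add: r_distr Rc)
  also have "\<dots> = (s2 r \<oplus> s2 s) \<otimes> mn (0,Suc 0) \<oplus> (d2 r \<oplus> d2 s) \<otimes> mn (0,0)"
    using s2[OF assms(1)] s2[OF assms(2)] x2c by (simp add: mn_01 mn_00 Rc l_distr a_ac)
  finally have E: "s2 (r \<oplus> s) \<otimes> mn (0,Suc 0) \<oplus> d2 (r \<oplus> s) \<otimes> mn (0,0) =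
     (s2 r \<oplus> s2 s) \<otimes> mn (0,Suc 0) \<oplus> (d2 r \<oplus> d2 s) \<otimes> mn (0,0)" .
  show ?thesis using two_eq[OF m _ E] by simp
qed

lemma s1_pow_zero: "c \<in> R \<Longrightarrow> (s1 ^^ k) c = \<zero> \<longleftrightarrow> c = \<zero>"
proof (induction k)
  case 0 then show ?case by simp
next
  case (Suc k)
  have "(s1 ^^ Suc k) c = \<zero> \<longleftrightarrow> s1 ((s1 ^^ k) c) = s1 \<zero>" by (simp add: s1_zero)
  also have "\<dots> \<longleftrightarrow> (s1 ^^ k) c = \<zero>"
    using bij_betw_imp_inj_on[OF s1b] s1_pow_R[OF Suc.prems] R_zero by (auto dest: inj_onD)
  finally show ?case using Suc by simp
qed

lemma s2_pow_zero: "c \<in> R \<Longrightarrow> (s2 ^^ k) c = \<zero> \<longleftrightarrow> c = \<zero>"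
proof (induction k)
  case 0 then show ?case by simp
next
  case (Suc k)
  have "(s2 ^^ Suc k) c = \<zero> \<longleftrightarrow> s2 ((s2 ^^ k) c) = s2 \<zero>" by (simp add: s2_zero)
  also have "\<dots> \<longleftrightarrow> (s2 ^^ k) c = \<zero>"
    using bij_betw_imp_inj_on[OF s2b] s2_pow_R[OF Suc.prems] R_zero by (auto dest: inj_onD)
  finally show ?case using Suc by simp
qed

lemma sig_zero: "c \<in> R \<Longrightarrow> sig q c = \<zero> \<longleftrightarrow> c = \<zero>"
  unfolding sig_def using s1_pow_zero s2_pow_zero s2_pow_R by simp

lemma right_unique:
  assumes c: "\<forall>p. c p \<in> R" and z: "finsum A (\<lambda>p. mn p \<otimes> c p) ({..<N} \<times> {..<N}) = \<zero>"
  shows "\<forall>p\<in>{..<N} \<times> {..<N}. c p = \<zero>"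
proof (rule ccontr)
  assume neg: "\<not> ?thesis"
  define Z where "Z = {p \<in> box N. c p \<noteq> \<zero>}"
  have Zne: "Z \<noteq> {}" using neg unfolding Z_def box_def by blast
  have Zfin: "finite Z" unfolding Z_def by simp
  define D where "D = Max (dg ` Z)"
  have Dle: "\<And>p. p \<in> box N \<Longrightarrow> c p \<noteq> \<zero> \<Longrightarrow> dg p \<le> D"
    unfolding D_def using Zfin by (intro Max_ge) (auto simp: Z_def)
  have "D \<in> dg ` Z" unfolding D_def using Zfin Zne by (intro Max_in) auto
  then obtain pm where pm: "pm \<in> Z" "dg pm = D" by (auto simp del: dg_def)
  define t where "t = (\<lambda>p. if p \<in> box N \<and> dg p = D then sig p (c p) else \<zero>)"
  have tR: "\<And>p. t p \<in> R" unfolding t_def using sig_R c R_zero by auto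
  have ex: "\<forall>p\<in>box N. \<exists>l. l \<in> LL (\<lambda>q. dg q < D) \<and> mn p \<otimes> c p = t p \<otimes> mn p \<oplus> l"
  proof
    fix p assume p: "p \<in> box N"
    show "\<exists>l. l \<in> LL (\<lambda>q. dg q < D) \<and> mn p \<otimes> c p = t p \<otimes> mn p \<oplus> l"
    proof (cases "c p = \<zero>")
      case True
      then have "t p = \<zero>" unfolding t_def using sig_zero R_zero by simp
      then show ?thesis using True by (intro exI[of _ \<zero>]) (simp add: LL_zero)
    next
      case False
      have dp: "dg p \<le> D" using Dle[OF p False] .
      obtain l0 where l0: "l0 \<in> LL (\<lambda>q'. dg q' < dg p)" "mn p \<otimes> c p = sig p (c p) \<otimes> mn p \<oplus> l0"
        using top c by blast
      have l0c: "l0 \<in> carrier A" using LL_carr l0(1) .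
      show ?thesis
      proof (cases "dg p = D")
        case True
        then show ?thesis using l0 p unfolding t_def by auto
      next
        case False
        then have tp: "t p = \<zero>" unfolding t_def by simp
        have "sig p (c p) \<otimes> mn p \<oplus> l0 \<in> LL (\<lambda>q. dg q < D)"
        proof (rule LL_add)
          show "sig p (c p) \<otimes> mn p \<in> LL (\<lambda>q. dg q < D)"
            by (rule LL_gen[OF sig_R[OF c[rule_format]]]) (use dp False in auto)
          show "l0 \<in> LL (\<lambda>q. dg q < D)"
            by (rule LL_mono[OF _ l0(1)]) (use dp False in auto)
        qed
        then show ?thesis using l0 tp l0c Rc[OF sig_R[OF c[rule_format]]]
          by (intro exI[of _ "sig p (c p) \<otimes> mn p \<oplus> l0"]) (simp add: Rc)
      qed
    qed
  qed
  then obtain l where l: "\<And>p. p \<in> box N \<Longrightarrow> l p \<in> LL (\<lambda>q. dg q < D)"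
    "\<And>p. p \<in> box N \<Longrightarrow> mn p \<otimes> c p = t p \<otimes> mn p \<oplus> l p"
    by metis
  have lc: "l \<in> box N \<rightarrow> carrier A" using l(1) LL_carr by blast
  have tc: "(\<lambda>p. t p \<otimes> mn p) \<in> box N \<rightarrow> carrier A" using tR Rc by auto
  have lc': "\<And>p. p \<in> box N \<Longrightarrow> l p \<in> carrier A" using l(1) LL_carr by blast
  have tc': "\<And>p. t p \<otimes> mn p \<in> carrier A" using tR Rc by auto
  have "\<zero> = finsum A (\<lambda>p. mn p \<otimes> c p) (box N)" using z unfolding box_def by simp
  also have "\<dots> = finsum A (\<lambda>p. t p \<otimes> mn p \<oplus> l p) (box N)"
    by (rule finsum_cong) (use l(2) lc' tc' in auto)
  also have "\<dots> = finsum A (\<lambda>p. t p \<otimes> mn p) (box N) \<oplus> finsum A l (box N)"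
    by (rule finsum_addf[OF tc lc])
  finally have sum0: "finsum A (\<lambda>p. t p \<otimes> mn p) (box N) \<oplus> finsum A l (box N) = \<zero>" by simp
  have "finsum A l (box N) \<in> LL (\<lambda>q. dg q < D)"
    unfolding LL_def by (rule addcl_finsum[OF _ LL_gens]) (use l(1) in \<open>auto simp: LL_def\<close>)
  then obtain f M where f: "L.ok f M" "\<forall>q. \<not> dg q < D \<longrightarrow> f q = \<zero>" "finsum A l (box N) = L.val f M"
    using L.to_val[of _ "\<lambda>q. dg q < D"] unfolding LL_def by blast
  have okt: "L.ok t N" unfolding L.ok_def using tR by (auto simp: t_def)
  have vt: "L.val t N = finsum A (\<lambda>p. t p \<otimes> mn p) (box N)" unfolding L.val_def by simp
  have "L.val (\<lambda>q. t q \<oplus> f q) (max N M) = \<zero>"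
    using L.val_add[OF okt f(1)] sum0 vt f(3) by simp
  then have "t pm \<oplus> f pm = \<zero>" using indep[OF L.ok_add[OF okt f(1)]] by blast
  moreover have "f pm = \<zero>" using f(2)[rule_format, of pm] pm(2) by simp
  moreover have "pm \<in> box N" "c pm \<noteq> \<zero>" using pm(1) unfolding Z_def by auto
  ultimately have "sig pm (c pm) = \<zero>" unfolding t_def using pm(2) sig_R c Rc by simp
  then show False using sig_zero c \<open>c pm \<noteq> \<zero>\<close> by blast
qed

lemma rfb: "right_free_basis A R (mon A x1 x2)"
  unfolding right_free_basis_def using right_span right_unique by blast

end


locale gr = ring A for A :: "'a ring" (structure) +
  fixes K S Rg
  assumes ga: "graded_alg A K S Rg" and sf: "subfield K A" and sub: "subring S A"
begin

lemma S_carr: "S \<subseteq> carrier A" using subringE(1)[OF sub] .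
lemma ga_parts:
  "\<forall>m. Rg m \<subseteq> S \<and> \<zero> \<in> Rg m \<and> (\<forall>a\<in>Rg m. \<forall>b\<in>Rg m. a \<oplus> b \<in> Rg m) \<and> (\<forall>k\<in>K. \<forall>a\<in>Rg m. k \<otimes> a \<in> Rg m)"
  "\<forall>r\<in>S. \<exists>N f. (\<forall>m. f m \<in> Rg m) \<and> r = finsum A f {..<N}"
  "\<forall>N f. (\<forall>m. f m \<in> Rg m) \<and> finsum A f {..<N} = \<zero> \<longrightarrow> (\<forall>m<N. f m = \<zero>)"
proof -
  note g = ga[unfolded graded_alg_def]
  show "\<forall>m. Rg m \<subseteq> S \<and> \<zero> \<in> Rg m \<and> (\<forall>a\<in>Rg m. \<forall>b\<in>Rg m. a \<oplus> b \<in> Rg m) \<and> (\<forall>k\<in>K. \<forall>a\<in>Rg m. k \<otimes> a \<in> Rg m)"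
    by (rule conjunct1[OF g])
  show "\<forall>r\<in>S. \<exists>N f. (\<forall>m. f m \<in> Rg m) \<and> r = finsum A f {..<N}"
    by (rule conjunct1[OF conjunct2[OF conjunct2[OF conjunct2[OF g]]]])
  show "\<forall>N f. (\<forall>m. f m \<in> Rg m) \<and> finsum A f {..<N} = \<zero> \<longrightarrow> (\<forall>m<N. f m = \<zero>)"
    by (rule conjunct2[OF conjunct2[OF conjunct2[OF conjunct2[OF g]]]])
qed

lemma Rg_S: "Rg m \<subseteq> S" using ga_parts(1) by blast
lemma Rg_c: "a \<in> Rg m \<Longrightarrow> a \<in> carrier A" using Rg_S S_carr by blast
lemma Rg_zero: "\<zero> \<in> Rg m" using ga_parts(1) by blast
lemma Rg_add: "a \<in> Rg m \<Longrightarrow> b \<in> Rg m \<Longrightarrow> a \<oplus> b \<in> Rg m" using ga_parts(1) by blast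
lemma Rg_smult: "k \<in> K \<Longrightarrow> a \<in> Rg m \<Longrightarrow> k \<otimes> a \<in> Rg m" using ga_parts(1) by blast
lemma ga_dec: "r \<in> S \<Longrightarrow> \<exists>N f. (\<forall>m. f m \<in> Rg m) \<and> r = finsum A f {..<N}"
  using ga_parts(2) by blast
lemma ga_uniq: "\<forall>m. f m \<in> Rg m \<Longrightarrow> finsum A f {..<N} = \<zero> \<Longrightarrow> m < N \<Longrightarrow> f m = \<zero>"
  using ga_parts(3) by blast
lemma K_carr: "K \<subseteq> carrier A" using subfieldE(3)[OF sf] .
lemma K_one: "\<one> \<in> K" using subringE(3)[OF subfieldE(1)[OF sf]] .
lemma K_neg: "k \<in> K \<Longrightarrow> \<ominus> k \<in> K" using subringE(5)[OF subfieldE(1)[OF sf]] by blast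
lemma K_zero: "\<zero> \<in> K" using subringE(2)[OF subfieldE(1)[OF sf]] .
lemma Rg_neg: "a \<in> Rg m \<Longrightarrow> \<ominus> a \<in> Rg m"
proof -
  assume a: "a \<in> Rg m"
  have "\<ominus> \<one> \<otimes> a \<in> Rg m" using Rg_smult[OF K_neg[OF K_one] a] .
  then show ?thesis using Rg_c[OF a] by (simp add: l_minus)
qed
lemma S_add: "a \<in> S \<Longrightarrow> b \<in> S \<Longrightarrow> a \<oplus> b \<in> S" using subringE(7)[OF sub] by blast

lemma s_finsum:
  assumes sadd: "\<And>r t. r \<in> S \<Longrightarrow> t \<in> S \<Longrightarrow> s (r \<oplus> t) = s r \<oplus> s t" and s0: "s \<zero> = \<zero>"
    and sS: "\<And>r. r \<in> S \<Longrightarrow> s r \<in> S" and g: "\<And>n. g n \<in> S"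
  shows "finsum A g {..<(k::nat)} \<in> S \<and> s (finsum A g {..<k}) = finsum A (\<lambda>n. s (g n)) {..<k}"
proof (induction k)
  case 0 then show ?case using s0 subringE(2)[OF sub] by simp
next
  case (Suc k)
  have gc: "g \<in> {..<k} \<rightarrow> carrier A" "g k \<in> carrier A" using g S_carr by auto
  have sgc: "(\<lambda>n. s (g n)) \<in> {..<k} \<rightarrow> carrier A" "s (g k) \<in> carrier A" using sS g S_carr by auto
  have e1: "finsum A g {..<Suc k} = g k \<oplus> finsum A g {..<k}"
    using gc by (simp add: lessThan_Suc finsum_insert)
  have e2: "finsum A (\<lambda>n. s (g n)) {..<Suc k} = s (g k) \<oplus> finsum A (\<lambda>n. s (g n)) {..<k}"
    using sgc by (simp add: lessThan_Suc finsum_insert)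
  show ?case using Suc.IH e1 e2 sadd[OF g] S_add[OF g] by simp
qed

lemma finsum_ext_zero:
  fixes N N' :: nat
  assumes "\<And>n. n \<ge> N \<Longrightarrow> g n = \<zero>" "N \<le> N'" "\<And>n. g n \<in> carrier A"
  shows "finsum A g {..<N'} = finsum A g {..<N}"
  by (rule add.finprod_mono_neutral_cong_right) (use assms in \<open>auto simp: Pi_def\<close>)

lemma preimage:
  assumes sadd: "\<And>r t. r \<in> S \<Longrightarrow> t \<in> S \<Longrightarrow> s (r \<oplus> t) = s r \<oplus> s t" and s0: "s \<zero> = \<zero>"
    and sS: "\<And>r. r \<in> S \<Longrightarrow> s r \<in> S" and inj: "inj_on s S" and surj: "\<And>r. r \<in> S \<Longrightarrow> \<exists>v\<in>S. s v = r"
    and sg: "\<And>n r. r \<in> Rg n \<Longrightarrow> s r \<in> Rg n" and r: "r \<in> Rg m"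
  shows "\<exists>v\<in>Rg m. s v = r"
proof -
  obtain v where v: "v \<in> S" "s v = r" using surj r Rg_S by blast
  obtain N f where f: "\<forall>n. f n \<in> Rg n" "v = finsum A f {..<N}"
    using ga_dec[OF v(1)] by blast
  have fc: "\<And>n. f n \<in> carrier A" using f(1) Rg_c by blast
  define g where "g n = (if n < N then f n else \<zero>)" for n
  define N' where "N' = max N (Suc m)"
  have gR: "\<And>n. g n \<in> Rg n" unfolding g_def using f(1) Rg_zero by auto
  have gS: "\<And>n. g n \<in> S" using gR Rg_S by blast
  have gc: "\<And>n. g n \<in> carrier A" using gR Rg_c by blast
  have "v = finsum A g {..<N}" unfolding f(2) g_def
    by (rule finsum_cong) (auto simp: Pi_def fc)
  also have "\<dots> = finsum A g {..<N'}"
    by (rule finsum_ext_zero[symmetric]) (auto simp: g_def N'_def gc fc)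
  finally have vg: "v = finsum A g {..<N'}" .
  have rs: "r = finsum A (\<lambda>n. s (g n)) {..<N'}"
    using conjunct2[OF s_finsum[where s=s and g=g and k=N', OF sadd s0 sS gS]] unfolding vg[symmetric] v(2) .
  define u where "u n = s (g n) \<oplus> (if n = m then \<ominus> r else \<zero>)" for n
  have uR: "\<forall>n. u n \<in> Rg n" unfolding u_def using sg[OF gR] Rg_add Rg_neg[OF r] Rg_zero by auto
  have rc: "r \<in> carrier A" using Rg_c r .
  have mN: "m \<in> {..<N'}" unfolding N'_def by auto
  have sgc: "(\<lambda>n. s (g n)) \<in> {..<N'} \<rightarrow> carrier A" using sS gS S_carr by auto
  have ic: "(\<lambda>n. if n = m then \<ominus> r else \<zero>) \<in> {..<N'} \<rightarrow> carrier A" using rc by auto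
  have "finsum A u {..<N'} = finsum A (\<lambda>n. s (g n)) {..<N'} \<oplus> finsum A (\<lambda>n. if n = m then \<ominus> r else \<zero>) {..<N'}"
    unfolding u_def by (rule finsum_addf[OF sgc ic])
  also have "finsum A (\<lambda>n. if n = m then \<ominus> r else \<zero>) {..<N'} = \<ominus> r"
    using add.finprod_singleton_swap[OF mN, of "\<lambda>n. \<ominus> r"] rc by simp
  finally have "finsum A u {..<N'} = r \<oplus> \<ominus> r" by (simp only: rs[symmetric])
  then have "finsum A u {..<N'} = \<zero>" using rc by (simp only: r_neg)
  then have u0: "\<forall>n<N'. u n = \<zero>" using ga_uniq[OF uR] by blast
  have gz: "\<And>n. n \<noteq> m \<Longrightarrow> g n = \<zero>"
  proof -
    fix n assume nm: "n \<noteq> m"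
    show "g n = \<zero>"
    proof (cases "n < N'")
      case True
      then have "u n = \<zero>" using u0 by blast
      then have "s (g n) \<oplus> \<zero> = \<zero>" using nm unfolding u_def by simp
      moreover have "s (g n) \<in> carrier A" using sS gS S_carr by blast
      ultimately have "s (g n) = \<zero>" by simp
      then have "s (g n) = s \<zero>" using s0 by simp
      then show ?thesis using inj gS subringE(2)[OF sub] by (auto dest: inj_onD)
    next
      case False then show ?thesis unfolding g_def N'_def by auto
    qed
  qed
  have "v = finsum A (\<lambda>n. if n = m then g n else \<zero>) {..<N'}"
  proof -
    have "(\<lambda>n. if n = m then g n else \<zero>) = g" using gz by (intro ext) auto
    then show ?thesis unfolding vg by simp
  qed
  also have "\<dots> = g m" using add.finprod_singleton_swap[OF mN, of g] gc by simp
  finally show ?thesis using v(2) gR by blast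
qed

end


lemma (in ring) diff_eq: "a \<in> carrier R \<Longrightarrow> b \<in> carrier R \<Longrightarrow> a \<ominus> b = z \<Longrightarrow> a = b \<oplus> z"
proof -
  assume ab: "a \<in> carrier R" "b \<in> carrier R" and z: "a \<ominus> b = z"
  have "b \<oplus> z = b \<oplus> (\<ominus> b \<oplus> a)" using z ab by (simp add: a_minus_def a_comm)
  also have "\<dots> = a" using ab by (simp add: r_neg2)
  finally show ?thesis by simp
qed

context gr begin

lemma main_lemma:
  fixes x1 x2 :: 'a
  assumes KR: "K \<subseteq> S" and cent: "\<And>k a. k \<in> K \<Longrightarrow> a \<in> carrier A \<Longrightarrow> k \<otimes> a = a \<otimes> k"
    and a3: "graded_skew_PBW A K S Rg x1 x2"
    and a4: "connected_graded A K Rg x1 x2"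
  shows "graded_double_Ore A K S Rg x1 x2"
proof -
  note ringA = ring_axioms
  have sf: "subfield K A" by (rule sf)
  have sub: "subring S A" by (rule sub)
  have skew: "skew_PBW A S x1 x2"
    and SD: "\<forall>xi\<in>{x1, x2}. \<exists>\<sigma> \<delta>.
         (\<forall>r\<in>S. \<sigma> r \<in> S \<and> \<delta> r \<in> S \<and> xi \<otimes> r = \<sigma> r \<otimes> xi \<oplus> \<delta> r) \<and>
         bij_betw \<sigma> S S \<and>
         (\<forall>m. \<forall>r\<in>Rg m. \<sigma> r \<in> Rg m \<and> \<delta> r \<in> Rg (Suc m))"
    and GR: "\<forall>xi\<in>{x1, x2}. \<forall>xj\<in>{x1, x2}. \<exists>c\<in>Rg 0 - {\<zero>}.
         xj \<otimes> xi \<ominus> c \<otimes> xi \<otimes> xj \<in> lcomb A (Rg 2) (Rg 1) (Rg 1) x1 x2"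
    using a3 unfolding graded_skew_PBW_def by auto
  have Rc: "S \<subseteq> carrier A" and x1c: "x1 \<in> carrier A" and x2c: "x2 \<in> carrier A"
    and lfb: "left_free_basis A S (mon A x1 x2)"
    using skew unfolding skew_PBW_def by auto
  have "\<exists>\<sigma> \<delta>. (\<forall>r\<in>S. \<sigma> r \<in> S \<and> \<delta> r \<in> S \<and> x1 \<otimes> r = \<sigma> r \<otimes> x1 \<oplus> \<delta> r) \<and>
         bij_betw \<sigma> S S \<and> (\<forall>m. \<forall>r\<in>Rg m. \<sigma> r \<in> Rg m \<and> \<delta> r \<in> Rg (Suc m))"
    using SD by blast
  then obtain s1 d1 where s1: "\<forall>r\<in>S. s1 r \<in> S \<and> d1 r \<in> S \<and> x1 \<otimes> r = s1 r \<otimes> x1 \<oplus> d1 r"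
    and s1b: "bij_betw s1 S S" and s1g: "\<forall>m. \<forall>r\<in>Rg m. s1 r \<in> Rg m \<and> d1 r \<in> Rg (Suc m)"
    by blast
  have "\<exists>\<sigma> \<delta>. (\<forall>r\<in>S. \<sigma> r \<in> S \<and> \<delta> r \<in> S \<and> x2 \<otimes> r = \<sigma> r \<otimes> x2 \<oplus> \<delta> r) \<and>
         bij_betw \<sigma> S S \<and> (\<forall>m. \<forall>r\<in>Rg m. \<sigma> r \<in> Rg m \<and> \<delta> r \<in> Rg (Suc m))"
    using SD by blast
  then obtain s2 d2 where s2: "\<forall>r\<in>S. s2 r \<in> S \<and> d2 r \<in> S \<and> x2 \<otimes> r = s2 r \<otimes> x2 \<oplus> d2 r"
    and s2b: "bij_betw s2 S S" and s2g: "\<forall>m. \<forall>r\<in>Rg m. s2 r \<in> Rg m \<and> d2 r \<in> Rg (Suc m)"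
    by blast
  have "\<exists>c\<in>Rg 0 - {\<zero>}. x2 \<otimes> x1 \<ominus> c \<otimes> x1 \<otimes> x2 \<in> lcomb A (Rg 2) (Rg 1) (Rg 1) x1 x2"
    using GR by blast
  then obtain c0 r0 r1 r2 where c0: "c0 \<in> Rg 0" and r0: "r0 \<in> Rg 2" and r1: "r1 \<in> Rg 1" and r2: "r2 \<in> Rg 1"
    and e0: "x2 \<otimes> x1 \<ominus> c0 \<otimes> x1 \<otimes> x2 = r0 \<oplus> r1 \<otimes> x1 \<oplus> r2 \<otimes> x2"
    unfolding lcomb_def by blast
  have "\<exists>c\<in>Rg 0 - {\<zero>}. x1 \<otimes> x2 \<ominus> c \<otimes> x2 \<otimes> x1 \<in> lcomb A (Rg 2) (Rg 1) (Rg 1) x1 x2"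
    using GR by blast
  then obtain c' u0 u1 u2 where c': "c' \<in> Rg 0" and u0: "u0 \<in> Rg 2" and u1: "u1 \<in> Rg 1" and u2: "u2 \<in> Rg 1"
    and e1: "x1 \<otimes> x2 \<ominus> c' \<otimes> x2 \<otimes> x1 = u0 \<oplus> u1 \<otimes> x1 \<oplus> u2 \<otimes> x2"
    unfolding lcomb_def by blast
  have mon00: "mon A x1 x2 (0,0) = \<one>" unfolding mon_def by simp
  have Rg0K: "\<And>r. r \<in> Rg 0 \<Longrightarrow> r \<in> K"
  proof -
    fix r assume r: "r \<in> Rg 0"
    have "r = \<one> \<otimes> (r \<otimes> mon A x1 x2 (0,0))" using Rg_c[OF r] by (simp add: mon00)
    moreover have "\<one> \<in> K" by (rule K_one)
    ultimately have "r \<in> Agr A K Rg x1 x2 0" unfolding Agr_def kspan_def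
      using r by (intro addcl.incl) fastforce
    then show "r \<in> K" using a4 unfolding connected_graded_def by simp
  qed
  have c0K: "c0 \<in> K" and c'K: "c' \<in> K" using Rg0K c0 c' by auto
  have RgR: "\<And>a m. a \<in> Rg m \<Longrightarrow> a \<in> S" using Rg_S by blast
  have Rgc: "\<And>a m. a \<in> Rg m \<Longrightarrow> a \<in> carrier A" using Rg_c by blast
  have rel: "x2 \<otimes> x1 = c0 \<otimes> x1 \<otimes> x2 \<oplus> (r0 \<oplus> r1 \<otimes> x1 \<oplus> r2 \<otimes> x2)"
    by (rule diff_eq[OF _ _ e0]) (use x1c x2c Rgc[OF c0] in auto)
  interpret P: pbw A S x1 x2 s1 d1 s2 d2 c0 r0 r1 r2
  proof (rule pbw.intro[OF ringA], rule pbw_axioms.intro)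
    show "subring S A" by (rule sub)
  qed (use x1c x2c lfb s1 s1b s2 s2b RgR c0 r0 r1 r2 rel cent c0K in auto)
  have rbasis: "right_free_basis A S (mon A x1 x2)" by (rule P.rfb)
  have gen: "generate_ring A (S \<union> {x1, x2}) = carrier A" by (rule P.gen_ring)
  have relR: "x2 \<otimes> x1 = c0 \<otimes> x1 \<otimes> x2 \<oplus> \<zero> \<otimes> x1 \<otimes> x1 \<oplus> r1 \<otimes> x1 \<oplus> r2 \<otimes> x2 \<oplus> r0"
    unfolding rel using x1c x2c Rgc[OF c0] Rgc[OF r0] Rgc[OF r1] Rgc[OF r2] by (simp add: a_ac)
  have pre1: "\<And>r m. r \<in> Rg m \<Longrightarrow> \<exists>v\<in>Rg m. s1 v = r"
    by (rule preimage[of s1]) (use P.s1_add P.s1_zero s1 bij_betw_imp_inj_on[OF s1b] P.sur1 s1g in auto)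
  have pre2: "\<And>r m. r \<in> Rg m \<Longrightarrow> \<exists>v\<in>Rg m. s2 v = r"
    by (rule preimage[of s2]) (use P.s2_add P.s2_zero s2 bij_betw_imp_inj_on[OF s2b] P.sur2 s2g in auto)
  obtain v1 where v1: "v1 \<in> Rg 1" "s1 v1 = u1" using pre1[OF u1] by blast
  obtain v2 where v2: "v2 \<in> Rg 1" "s2 v2 = u2" using pre2[OF u2] by blast
  have dv1: "d1 v1 \<in> Rg 2" using s1g v1(1) by (auto simp: numeral_2_eq_2)
  have dv2: "d2 v2 \<in> Rg 2" using s2g v2(1) by (auto simp: numeral_2_eq_2)
  have f1: "u1 \<otimes> x1 = x1 \<otimes> v1 \<oplus> \<ominus> d1 v1"
    unfolding v1(2)[symmetric] by (rule eq_move) (use s1 v1 RgR Rgc x1c dv1 Rgc[OF u1] in auto)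
  have f2: "u2 \<otimes> x2 = x2 \<otimes> v2 \<oplus> \<ominus> d2 v2"
    unfolding v2(2)[symmetric] by (rule eq_move) (use s2 v2 RgR Rgc x2c dv2 Rgc[OF u2] in auto)
  define t0 where "t0 = u0 \<oplus> \<ominus> d1 v1 \<oplus> \<ominus> d2 v2"
  have t0: "t0 \<in> Rg 2" unfolding t0_def using u0 dv1 dv2 Rg_add Rg_neg by auto
  have relL0: "x1 \<otimes> x2 = c' \<otimes> x2 \<otimes> x1 \<oplus> (u0 \<oplus> u1 \<otimes> x1 \<oplus> u2 \<otimes> x2)"
    by (rule diff_eq[OF _ _ e1]) (use x1c x2c Rgc[OF c'] in auto)
  have relL: "x1 \<otimes> x2 = c' \<otimes> x2 \<otimes> x1 \<oplus> \<zero> \<otimes> x1 \<otimes> x1 \<oplus> x1 \<otimes> v1 \<oplus> x2 \<otimes> v2 \<oplus> t0"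
    unfolding relL0 f1 f2 t0_def
    using x1c x2c Rgc[OF c'] Rgc[OF u0] Rgc[OF v1(1)] Rgc[OF v2(1)] Rgc[OF dv1] Rgc[OF dv2]
    by (simp add: a_ac)
  have lc1: "\<And>r S0 S1 S2. r \<in> S \<Longrightarrow> d1 r \<in> S0 \<Longrightarrow> s1 r \<in> S1 \<Longrightarrow> \<zero> \<in> S2 \<Longrightarrow>
      x1 \<otimes> r \<in> lcomb A S0 S1 S2 x1 x2"
  proof -
    fix r S0 S1 S2 assume r: "r \<in> S" and h: "d1 r \<in> S0" "s1 r \<in> S1" "\<zero> \<in> S2"
    have "x1 \<otimes> r = d1 r \<oplus> s1 r \<otimes> x1 \<oplus> \<zero> \<otimes> x2"
    proof -
      have sr: "s1 r \<in> carrier A" "d1 r \<in> carrier A" using s1 r Rc by auto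
      have "x1 \<otimes> r = s1 r \<otimes> x1 \<oplus> d1 r" using s1 r by blast
      then show ?thesis using sr x1c x2c by (simp add: a_comm)
    qed
    then show "x1 \<otimes> r \<in> lcomb A S0 S1 S2 x1 x2" unfolding lcomb_def using h by blast
  qed
  have lc2: "\<And>r S0 S1 S2. r \<in> S \<Longrightarrow> d2 r \<in> S0 \<Longrightarrow> \<zero> \<in> S1 \<Longrightarrow> s2 r \<in> S2 \<Longrightarrow>
      x2 \<otimes> r \<in> lcomb A S0 S1 S2 x1 x2"
  proof -
    fix r S0 S1 S2 assume r: "r \<in> S" and h: "d2 r \<in> S0" "\<zero> \<in> S1" "s2 r \<in> S2"
    have "x2 \<otimes> r = d2 r \<oplus> \<zero> \<otimes> x1 \<oplus> s2 r \<otimes> x2"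
    proof -
      have sr: "s2 r \<in> carrier A" "d2 r \<in> carrier A" using s2 r Rc by auto
      have "x2 \<otimes> r = s2 r \<otimes> x2 \<oplus> d2 r" using s2 r by blast
      then show ?thesis using sr x1c x2c by (simp add: a_comm)
    qed
    then show "x2 \<otimes> r \<in> lcomb A S0 S1 S2 x1 x2" unfolding lcomb_def using h by blast
  qed
  have comR: "\<forall>xi\<in>{x1, x2}. \<forall>r\<in>S. xi \<otimes> r \<in> lcomb A S S S x1 x2"
    using lc1 lc2 s1 s2 P.R_zero by auto
  have comG: "\<forall>xi\<in>{x1, x2}. \<forall>m. \<forall>r\<in>Rg m. xi \<otimes> r \<in> lcomb A (Rg (Suc m)) (Rg m) (Rg m) x1 x2"
    using lc1 lc2 s1g s2g RgR Rg_zero by auto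
  have zK: "\<zero> \<in> K" by (rule K_zero)
  have t0S: "t0 \<in> S" using RgR t0 by blast
  have "right_double_Ore A K S x1 x2"
    unfolding right_double_Ore_def
    using Rc x1c x2c gen lfb comR relR c0K zK RgR[OF r0] RgR[OF r1] RgR[OF r2] by blast
  moreover have "left_double_Ore A K S x1 x2"
    unfolding left_double_Ore_def
    using Rc x1c x2c gen rbasis comR relL c'K zK t0S RgR[OF v1(1)] RgR[OF v2(1)] by blast
  ultimately have "graded_double_Ore A K S Rg x1 x2"
    unfolding graded_double_Ore_def
    using relR relL c0K c'K zK r0 r1 r2 t0 v1(1) v2(1) comG by blast
  then show ?thesis .
qed

end

theorem theorem3p2:
  fixes A :: "'a ring" and K R :: "'a set" and Rg :: "nat \<Rightarrow> 'a set" and x1 x2 :: 'a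
  assumes "K_algebra_setup A K R"
    and "graded_alg A K R Rg"
    and "graded_skew_PBW A K R Rg x1 x2"
    and "connected_graded A K Rg x1 x2"
  shows "graded_double_Ore A K R Rg x1 x2 \<and> connected_graded A K Rg x1 x2"
proof -
  have ringA: "ring A" and sf: "subfield K A" and sub: "subring R A" and KR: "K \<subseteq> R"
    and cent: "\<And>k a. k \<in> K \<Longrightarrow> a \<in> carrier A \<Longrightarrow> k \<otimes>\<^bsub>A\<^esub> a = a \<otimes>\<^bsub>A\<^esub> k"
    using assms(1) unfolding K_algebra_setup_def by auto
  have G: "gr A K R Rg" using ringA assms(2) sf sub by (simp add: gr_def gr_axioms_def)
  have "graded_double_Ore A K R Rg x1 x2"
    by (rule gr.main_lemma[OF G KR cent assms(3) assms(4)])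
  then show ?thesis using assms(4) by blast
qed



end
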